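(* Let $H=(E,\{X_i:i\in[n]\})$ be a hypergraph and $t_1,\dots,t_n$ integers with $0\le t_i\le|X_i|$ satisfying: (H2) $|X_i\cap X_j|\le1$ for all distinct $i,j$; (H3) there are no $a,b,c\in E$ with $\{a,b\},\{a,c\},\{b,c\}$ all hyperedges; (T) for each $i$, either $t_i=1$ or $\min\{w(e):e\in X_i\}\le t_i<|X_i|$. Let $\rho(A)=\sum_{i=1}^n\min\{|A\cap X_i|,t_i\}$ for $A\subseteq E$. Let $\sigma$ be any polymatroid on $E$ such that $\sigma(A)=\rho(A)$ for every $A\subseteq E$ satisfying at least one of: (a) $|A|\le3$; (b) $|A|=4$ and there are three hyperedges $X_h,X_i,X_j$ with $t_h=t_i=t_j=1$ such that some element of $A$ lies in exactly one of these three hyperedges and each of the other three elements of $A$ lies in exactly two of them; (c) $A\subseteq X_i$ and $|A|\le t_i+1$ for some $i\in[n]$; (d) $A\subseteq X_i\triangle X_j$ for some $i,j\in[n]$ with $X_i\cap X_j\ne\emptyset$, where $|A\cap X_i|\le t_i$ and $|A\cap X_j|\le t_j$. Then, for each positive integer $k$, from every element of $\Delta_\sigma^k$ one can construct a proper $k$-coloring $c$ of the line graph $G_H$, and this coloring satisfies $\sigma(E)\ge c_1+2c_2^+$. If $\sigma=\rho$, then the image of the map $\phi$ (defined below) on proper $k$-colorings of $G_H$ is exactly $\Delta_\rho^k$. If $\sigma(E)<\chi(G_H)$, then $\sigma$ is indecomposable.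
   Context: A polymatroid on a finite set $E$ is a function $\rho:2^E\to\mathbb{Z}$ that is normalized, non-decreasing and submodular. A hypergraph is $H=(E,\mathcal{E})$ with $E$ finite and $\mathcal{E}=\{X_i:i\in[n]\}$ a set of nonempty subsets of $E$; $w(e)$ is the number of hyperedges containing $e$; $\triangle$ is symmetric difference. The line graph $G_H$ has vertex set $[n]$ with $ij$ an edge iff $i\ne j$ and $X_i\cap X_j\ne\emptyset$. For a proper $k$-coloring $c:[n]\to[k]$, $c_1$ (resp. $c_2^+$) is the number of $i\in[k]$ with $|c^{-1}(i)|=1$ (resp. $\ge2$). $\Delta_\sigma^k$ is the set of $k$-tuples $(N_1,\dots,N_k)$ of matroids on $E$ with $\sigma=r_{N_1}+\cdots+r_{N_k}$. A polymatroid is indecomposable if it is not a sum of rank functions of finitely many matroids on $E$. The map $\phi$ sends a proper $k$-coloring $c$ to $(N_1,\dots,N_k)$ with $N_i=\bigl(\bigoplus_{h:c(h)=i}U_{t_h,X_h}\bigr)\oplus U_{0,Y}$, $Y=E-\bigcup_{h:c(h)=i}X_h$, where $U_{r,X}$ is the rank-$r$ uniform matroid on $X$. *)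

theory Defs
  imports Main
begin

definition polymatroid :: "'a set \<Rightarrow> ('a set \<Rightarrow> int) \<Rightarrow> bool" where
  "polymatroid E f \<longleftrightarrow>
     f {} = 0 \<and>
     (\<forall>A B. A \<subseteq> B \<and> B \<subseteq> E \<longrightarrow> f A \<le> f B) \<and>
     (\<forall>A B. A \<subseteq> E \<and> B \<subseteq> E \<longrightarrow> f (A \<union> B) + f (A \<inter> B) \<le> f A + f B)"

text \<open>A matroid on E is represented by its rank function. To make matroids on E
  correspond bijectively to their representations, the rank function is required to be
  determined by its values on subsets of E (r A = r (A \<inter> E)).\<close>
definition matroid_rank :: "'a set \<Rightarrow> ('a set \<Rightarrow> int) \<Rightarrow> bool" where
  "matroid_rank E r \<longleftrightarrow>
     (\<forall>A. r A = r (A \<inter> E)) \<and>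
     (\<forall>A. A \<subseteq> E \<longrightarrow> 0 \<le> r A \<and> r A \<le> int (card A)) \<and>
     (\<forall>A B. A \<subseteq> B \<and> B \<subseteq> E \<longrightarrow> r A \<le> r B) \<and>
     (\<forall>A B. A \<subseteq> E \<and> B \<subseteq> E \<longrightarrow> r (A \<union> B) + r (A \<inter> B) \<le> r A + r B)"

definition Delta :: "'a set \<Rightarrow> ('a set \<Rightarrow> int) \<Rightarrow> nat \<Rightarrow> ('a set \<Rightarrow> int) list set" where
  "Delta E \<sigma> k = {N. length N = k \<and> (\<forall>r \<in> set N. matroid_rank E r) \<and>
                      (\<forall>A. A \<subseteq> E \<longrightarrow> \<sigma> A = (\<Sum>r\<leftarrow>N. r A))}"

definition indecomposable :: "'a set \<Rightarrow> ('a set \<Rightarrow> int) \<Rightarrow> bool" where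
  "indecomposable E \<sigma> \<longleftrightarrow> \<not> (\<exists>k N. N \<in> Delta E \<sigma> k)"

text \<open>Rank function of the uniform matroid U_{r,X} (extended to ground set E by loops).\<close>
definition uniform_rank :: "nat \<Rightarrow> 'a set \<Rightarrow> 'a set \<Rightarrow> int" where
  "uniform_rank r X A = int (min (card (A \<inter> X)) r)"

definition hypergraph :: "'a set \<Rightarrow> nat \<Rightarrow> (nat \<Rightarrow> 'a set) \<Rightarrow> bool" where
  "hypergraph E n X \<longleftrightarrow> finite E \<and> (\<forall>i \<in> {1..n}. X i \<noteq> {} \<and> X i \<subseteq> E) \<and> inj_on X {1..n}"

definition weight :: "nat \<Rightarrow> (nat \<Rightarrow> 'a set) \<Rightarrow> 'a \<Rightarrow> nat" where
  "weight n X e = card {i \<in> {1..n}. e \<in> X i}"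

definition rho :: "nat \<Rightarrow> (nat \<Rightarrow> 'a set) \<Rightarrow> (nat \<Rightarrow> nat) \<Rightarrow> 'a set \<Rightarrow> int" where
  "rho n X t A = (\<Sum>i = 1..n. int (min (card (A \<inter> X i)) (t i)))"

definition proper_coloring :: "nat \<Rightarrow> (nat \<Rightarrow> 'a set) \<Rightarrow> nat \<Rightarrow> (nat \<Rightarrow> nat) \<Rightarrow> bool" where
  "proper_coloring n X k c \<longleftrightarrow>
     (\<forall>i \<in> {1..n}. c i \<in> {1..k}) \<and>
     (\<forall>i \<in> {1..n}. \<forall>j \<in> {1..n}. i \<noteq> j \<and> X i \<inter> X j \<noteq> {} \<longrightarrow> c i \<noteq> c j)"

definition chromatic_number :: "nat \<Rightarrow> (nat \<Rightarrow> 'a set) \<Rightarrow> nat" where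
  "chromatic_number n X = (LEAST k. \<exists>c. proper_coloring n X k c)"

definition c_one :: "nat \<Rightarrow> nat \<Rightarrow> (nat \<Rightarrow> nat) \<Rightarrow> nat" where
  "c_one n k c = card {i \<in> {1..k}. card {h \<in> {1..n}. c h = i} = 1}"

definition c_two_plus :: "nat \<Rightarrow> nat \<Rightarrow> (nat \<Rightarrow> nat) \<Rightarrow> nat" where
  "c_two_plus n k c = card {i \<in> {1..k}. card {h \<in> {1..n}. c h = i} \<ge> 2}"

text \<open>The map \<phi>: N_i = (\<Oplus>_{h: c h = i} U_{t_h,X_h}) \<oplus> U_{0,Y}.\<close>
definition phi :: "'a set \<Rightarrow> nat \<Rightarrow> (nat \<Rightarrow> 'a set) \<Rightarrow> (nat \<Rightarrow> nat) \<Rightarrow> nat \<Rightarrow> (nat \<Rightarrow> nat)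
                    \<Rightarrow> ('a set \<Rightarrow> int) list" where
  "phi E n X t k c = map (\<lambda>i. \<lambda>A.
       (\<Sum>h \<in> {h \<in> {1..n}. c h = i}. uniform_rank (t h) (X h) A)
       + uniform_rank 0 (E - (\<Union>h \<in> {h \<in> {1..n}. c h = i}. X h)) A) [1..<k+1]"

definition H2 :: "nat \<Rightarrow> (nat \<Rightarrow> 'a set) \<Rightarrow> bool" where
  "H2 n X \<longleftrightarrow> (\<forall>i \<in> {1..n}. \<forall>j \<in> {1..n}. i \<noteq> j \<longrightarrow> card (X i \<inter> X j) \<le> 1)"

definition H3 :: "'a set \<Rightarrow> nat \<Rightarrow> (nat \<Rightarrow> 'a set) \<Rightarrow> bool" where
  "H3 E n X \<longleftrightarrow> \<not> (\<exists>a \<in> E. \<exists>b \<in> E. \<exists>c \<in> E. a \<noteq> b \<and> a \<noteq> c \<and> b \<noteq> c \<and>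
      {a, b} \<in> X ` {1..n} \<and> {a, c} \<in> X ` {1..n} \<and> {b, c} \<in> X ` {1..n})"

definition condT :: "nat \<Rightarrow> (nat \<Rightarrow> 'a set) \<Rightarrow> (nat \<Rightarrow> nat) \<Rightarrow> bool" where
  "condT n X t \<longleftrightarrow> (\<forall>i \<in> {1..n}. t i = 1 \<or>
      (Min (weight n X ` X i) \<le> t i \<and> t i < card (X i)))"

definition cond_b :: "nat \<Rightarrow> (nat \<Rightarrow> 'a set) \<Rightarrow> (nat \<Rightarrow> nat) \<Rightarrow> 'a set \<Rightarrow> bool" where
  "cond_b n X t A \<longleftrightarrow> card A = 4 \<and>
     (\<exists>h \<in> {1..n}. \<exists>i \<in> {1..n}. \<exists>j \<in> {1..n}. h \<noteq> i \<and> h \<noteq> j \<and> i \<noteq> j \<and>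
        t h = 1 \<and> t i = 1 \<and> t j = 1 \<and>
        (\<exists>a \<in> A. card {l \<in> {h, i, j}. a \<in> X l} = 1 \<and>
                 (\<forall>b \<in> A - {a}. card {l \<in> {h, i, j}. b \<in> X l} = 2)))"

definition cond_c :: "nat \<Rightarrow> (nat \<Rightarrow> 'a set) \<Rightarrow> (nat \<Rightarrow> nat) \<Rightarrow> 'a set \<Rightarrow> bool" where
  "cond_c n X t A \<longleftrightarrow> (\<exists>i \<in> {1..n}. A \<subseteq> X i \<and> card A \<le> t i + 1)"

definition cond_d :: "nat \<Rightarrow> (nat \<Rightarrow> 'a set) \<Rightarrow> (nat \<Rightarrow> nat) \<Rightarrow> 'a set \<Rightarrow> bool" where
  "cond_d n X t A \<longleftrightarrow> (\<exists>i \<in> {1..n}. \<exists>j \<in> {1..n}. X i \<inter> X j \<noteq> {} \<and>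
      A \<subseteq> (X i - X j) \<union> (X j - X i) \<and>
      card (A \<inter> X i) \<le> t i \<and> card (A \<inter> X j) \<le> t j)"

end

theory Submission
  imports Defs
begin


locale LS =
  fixes E :: "'a set" and n :: nat and X :: "nat \<Rightarrow> 'a set" and t :: "nat \<Rightarrow> nat"
    and k :: nat and r :: "nat \<Rightarrow> 'a set \<Rightarrow> int"
  assumes hyp: "hypergraph E n X" and h2: "H2 n X" and h3: "H3 E n X" and hT: "condT n X t"
    and mat: "\<And>j. j < k \<Longrightarrow> matroid_rank E (r j)"
    and agr: "\<And>A. A \<subseteq> E \<Longrightarrow> (card A \<le> 3 \<or> cond_b n X t A \<or> cond_c n X t A \<or> cond_d n X t A)
               \<Longrightarrow> (\<Sum>j<k. r j A) = rho n X t A"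
begin

definition dfc :: "nat \<Rightarrow> 'a set \<Rightarrow> int" where
  "dfc j A = (\<Sum>e\<in>A. r j {e}) - r j A"

definition dl :: "nat \<Rightarrow> 'a set \<Rightarrow> int" where
  "dl i A = int (card (A \<inter> X i)) - int (min (card (A \<inter> X i)) (t i))"

definition D :: "'a set \<Rightarrow> int" where
  "D A = (\<Sum>i\<in>{1..n}. dl i A)"

lemma finE: "finite E" using hyp by (simp add: hypergraph_def)
lemma XE: "i \<in> {1..n} \<Longrightarrow> X i \<subseteq> E" using hyp by (simp add: hypergraph_def)
lemma Xne: "i \<in> {1..n} \<Longrightarrow> X i \<noteq> {}" using hyp by (simp add: hypergraph_def)
lemma finX: "i \<in> {1..n} \<Longrightarrow> finite (X i)" using XE finE finite_subset by blast
lemma Xinj: "i \<in> {1..n} \<Longrightarrow> j \<in> {1..n} \<Longrightarrow> X i = X j \<Longrightarrow> i = j"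
  using hyp unfolding hypergraph_def inj_on_def by blast
lemma H2c: "i \<in> {1..n} \<Longrightarrow> j \<in> {1..n} \<Longrightarrow> i \<noteq> j \<Longrightarrow> card (X i \<inter> X j) \<le> 1"
  using h2 by (simp add: H2_def)
lemma H2e: "i \<in> {1..n} \<Longrightarrow> j \<in> {1..n} \<Longrightarrow> i \<noteq> j \<Longrightarrow> a \<in> X i \<Longrightarrow> a \<in> X j
   \<Longrightarrow> b \<in> X i \<Longrightarrow> b \<in> X j \<Longrightarrow> a = b"
proof (rule ccontr)
  assume a: "i \<in> {1..n}" "j \<in> {1..n}" "i \<noteq> j" "a \<in> X i" "a \<in> X j" "b \<in> X i" "b \<in> X j" "a \<noteq> b"
  have "{a,b} \<subseteq> X i \<inter> X j" using a by auto
  then have "card {a,b} \<le> card (X i \<inter> X j)" using finX a(1) by (meson card_mono finite_Int)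
  then show False using H2c[OF a(1-3)] a(8) by simp
qed

lemma H2card: "i \<in> {1..n} \<Longrightarrow> j \<in> {1..n} \<Longrightarrow> i \<noteq> j \<Longrightarrow> Q \<subseteq> X i \<Longrightarrow> card (Q \<inter> X j) \<le> 1"
proof -
  assume a: "i \<in> {1..n}" "j \<in> {1..n}" "i \<noteq> j" "Q \<subseteq> X i"
  have "Q \<inter> X j \<subseteq> X i \<inter> X j" using a by auto
  then have "card (Q \<inter> X j) \<le> card (X i \<inter> X j)" using finX a(1) by (meson card_mono finite_Int)
  then show ?thesis using H2c[OF a(1-3)] by simp
qed

lemma weight_pos: "i \<in> {1..n} \<Longrightarrow> e \<in> X i \<Longrightarrow> weight n X e \<ge> 1"
proof -
  assume a: "i \<in> {1..n}" "e \<in> X i"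
  have "i \<in> {i \<in> {1..n}. e \<in> X i}" using a by auto
  then have "{i \<in> {1..n}. e \<in> X i} \<noteq> {}" by auto
  then show ?thesis unfolding weight_def by (simp add: Suc_leI card_gt_0_iff)
qed

lemma t_pos: "i \<in> {1..n} \<Longrightarrow> t i \<ge> 1"
proof -
  assume a: "i \<in> {1..n}"
  show ?thesis
  proof (cases "t i = 1")
    case False
    then have "Min (weight n X ` X i) \<le> t i" using hT a by (auto simp: condT_def)
    moreover have "Min (weight n X ` X i) \<in> weight n X ` X i"
      using finX[OF a] Xne[OF a] by (intro Min_in) auto
    ultimately show ?thesis using weight_pos[OF a] by force
  qed simp
qed

lemma mr: "j < k \<Longrightarrow> matroid_rank E (r j)" by (rule mat)
lemma r_E: "j < k \<Longrightarrow> r j A = r j (A \<inter> E)"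
  using conjunct1[OF mr[unfolded matroid_rank_def]] by (rule spec)
lemma r_nonneg: "j < k \<Longrightarrow> A \<subseteq> E \<Longrightarrow> 0 \<le> r j A"
  using conjunct1[OF conjunct2[OF mr[unfolded matroid_rank_def]]] by (meson spec mp)
lemma r_card: "j < k \<Longrightarrow> A \<subseteq> E \<Longrightarrow> r j A \<le> int (card A)"
  using conjunct1[OF conjunct2[OF mr[unfolded matroid_rank_def]]] by (meson spec mp)
lemma r_mono: "j < k \<Longrightarrow> A \<subseteq> B \<Longrightarrow> B \<subseteq> E \<Longrightarrow> r j A \<le> r j B"
  using conjunct1[OF conjunct2[OF conjunct2[OF mr[unfolded matroid_rank_def]]]] by (meson spec mp)
lemma r_sub: "j < k \<Longrightarrow> A \<subseteq> E \<Longrightarrow> B \<subseteq> E \<Longrightarrow> r j (A \<union> B) + r j (A \<inter> B) \<le> r j A + r j B"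
  using conjunct2[OF conjunct2[OF conjunct2[OF mr[unfolded matroid_rank_def]]]] by (meson spec mp)
lemma r_empty: "j < k \<Longrightarrow> r j {} = 0" using r_nonneg[of j "{}"] r_card[of j "{}"] by simp
lemma r_single: "j < k \<Longrightarrow> e \<in> E \<Longrightarrow> r j {e} = 0 \<or> r j {e} = 1"
  using r_nonneg[of j "{e}"] r_card[of j "{e}"] by auto
lemma r_single_le: "j < k \<Longrightarrow> e \<in> E \<Longrightarrow> r j {e} \<le> 1"
  using r_card[of j "{e}"] by auto
lemma r_single_ge: "j < k \<Longrightarrow> e \<in> E \<Longrightarrow> 0 \<le> r j {e}"
  using r_nonneg[of j "{e}"] by auto

lemma r_subadd: "j < k \<Longrightarrow> A \<subseteq> E \<Longrightarrow> B \<subseteq> E \<Longrightarrow> r j (A \<union> B) \<le> r j A + r j B"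
proof -
  assume a: "j < k" "A \<subseteq> E" "B \<subseteq> E"
  have "0 \<le> r j (A \<inter> B)" using a by (intro r_nonneg) auto
  then show ?thesis using r_sub[OF a] by linarith
qed

lemma r_le_sum: assumes "j < k" shows "finite A \<Longrightarrow> A \<subseteq> E \<Longrightarrow> r j A \<le> (\<Sum>e\<in>A. r j {e})"
proof (induction A rule: finite_induct)
  case empty then show ?case by (simp add: r_empty assms)
next
  case (insert x F)
  have "r j (insert x F) \<le> r j {x} + r j F"
    using r_subadd[of j "{x}" F] insert assms by auto
  then show ?case using insert by simp
qed

lemma dfc_nonneg: "j < k \<Longrightarrow> finite A \<Longrightarrow> A \<subseteq> E \<Longrightarrow> 0 \<le> dfc j A"
  using r_le_sum by (simp add: dfc_def)

lemma dfc_empty: "j < k \<Longrightarrow> dfc j {} = 0" by (simp add: dfc_def r_empty)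

lemma dfc_super: "j < k \<Longrightarrow> finite A \<Longrightarrow> finite B \<Longrightarrow> A \<subseteq> E \<Longrightarrow> B \<subseteq> E \<Longrightarrow>
   dfc j A + dfc j B \<le> dfc j (A \<union> B) + dfc j (A \<inter> B)"
  using r_sub[of j A B] sum.union_inter[of A B "\<lambda>e. r j {e}"] by (simp add: dfc_def)

lemma dfc_disj: "j < k \<Longrightarrow> finite A \<Longrightarrow> finite B \<Longrightarrow> A \<subseteq> E \<Longrightarrow> B \<subseteq> E \<Longrightarrow> A \<inter> B = {} \<Longrightarrow>
   dfc j A + dfc j B \<le> dfc j (A \<union> B)"
  using dfc_super[of j A B] dfc_empty[of j] by simp

lemma dfc_mono: "j < k \<Longrightarrow> A \<subseteq> B \<Longrightarrow> finite B \<Longrightarrow> B \<subseteq> E \<Longrightarrow> dfc j A \<le> dfc j B"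
proof -
  assume a: "j < k" "A \<subseteq> B" "finite B" "B \<subseteq> E"
  have fA: "finite A" using a finite_subset by blast
  have "dfc j A + dfc j (B - A) \<le> dfc j (A \<union> (B - A))"
    using a fA by (intro dfc_disj) auto
  moreover have "A \<union> (B - A) = B" using a by auto
  moreover have "0 \<le> dfc j (B - A)" using a by (intro dfc_nonneg) auto
  ultimately show ?thesis by simp
qed

lemma dfc_insert: "j < k \<Longrightarrow> finite A \<Longrightarrow> A \<subseteq> E \<Longrightarrow> z \<in> E \<Longrightarrow> z \<notin> A \<Longrightarrow>
   dfc j (insert z A) \<le> dfc j A + r j {z}"
proof -
  assume a: "j < k" "finite A" "A \<subseteq> E" "z \<in> E" "z \<notin> A"
  have "r j A \<le> r j (insert z A)" using a by (intro r_mono) auto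
  then show ?thesis using a by (simp add: dfc_def)
qed

lemma cnt: "finite S \<Longrightarrow> (\<Sum>x\<in>S. if P x then (1::int) else 0) = int (card {x\<in>S. P x})"
  by (simp add: sum.inter_filter[symmetric])
lemma cntI: "finite A \<Longrightarrow> (\<Sum>e\<in>A. if e \<in> B then (1::int) else 0) = int (card (A \<inter> B))"
  using cnt[of A "\<lambda>e. e \<in> B"] by (simp add: Int_def)

lemma rho_single: "e \<in> E \<Longrightarrow> rho n X t {e} = int (weight n X e)"
proof -
  have "rho n X t {e} = (\<Sum>i\<in>{1..n}. if e \<in> X i then 1 else 0)"
    unfolding rho_def
  proof (rule sum.cong)
    fix i assume "i \<in> {1..n}"
    then show "int (min (card ({e} \<inter> X i)) (t i)) = (if e \<in> X i then 1 else 0)"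
      using t_pos[of i] by auto
  qed simp
  also have "\<dots> = int (card {i \<in> {1..n}. e \<in> X i})"
    by (rule cnt) simp
  finally show ?thesis by (simp add: weight_def)
qed

lemma sum_r_single: "e \<in> E \<Longrightarrow> (\<Sum>j<k. r j {e}) = int (weight n X e)"
  using agr[of "{e}"] rho_single[of e] by simp

lemma sum_weight: "finite A \<Longrightarrow> (\<Sum>e\<in>A. int (weight n X e)) = (\<Sum>i\<in>{1..n}. int (card (A \<inter> X i)))"
proof -
  assume fA: "finite A"
  have "(\<Sum>e\<in>A. int (weight n X e)) = (\<Sum>e\<in>A. \<Sum>i\<in>{1..n}. if e \<in> X i then 1 else 0)"
    by (intro sum.cong refl) (simp add: weight_def cnt)
  also have "\<dots> = (\<Sum>i\<in>{1..n}. \<Sum>e\<in>A. if e \<in> X i then 1 else 0)"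
    by (rule sum.swap)
  also have "\<dots> = (\<Sum>i\<in>{1..n}. int (card (A \<inter> X i)))"
    using fA by (intro sum.cong refl) (simp add: cntI)
  finally show ?thesis .
qed

lemma sum_dfc: "A \<subseteq> E \<Longrightarrow> (card A \<le> 3 \<or> cond_b n X t A \<or> cond_c n X t A \<or> cond_d n X t A)
   \<Longrightarrow> (\<Sum>j<k. dfc j A) = D A"
proof -
  assume a: "A \<subseteq> E" "card A \<le> 3 \<or> cond_b n X t A \<or> cond_c n X t A \<or> cond_d n X t A"
  have fA: "finite A" using a finE finite_subset by blast
  have "(\<Sum>j<k. dfc j A) = (\<Sum>j<k. \<Sum>e\<in>A. r j {e}) - (\<Sum>j<k. r j A)"
    by (simp add: dfc_def sum_subtractf)
  also have "(\<Sum>j<k. \<Sum>e\<in>A. r j {e}) = (\<Sum>e\<in>A. \<Sum>j<k. r j {e})" by (rule sum.swap)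
  also have "\<dots> = (\<Sum>e\<in>A. int (weight n X e))"
    using a by (intro sum.cong) (auto simp: sum_r_single)
  also have "\<dots> = (\<Sum>i\<in>{1..n}. int (card (A \<inter> X i)))" using sum_weight fA by simp
  also have "(\<Sum>j<k. r j A) = rho n X t A" using agr a by simp
  finally show ?thesis by (simp add: D_def dl_def rho_def sum_subtractf)
qed

lemma dl_nonneg: "0 \<le> dl i A" by (simp add: dl_def)

lemma dl_small: "i \<in> {1..n} \<Longrightarrow> card (A \<inter> X i) \<le> 1 \<Longrightarrow> dl i A = 0"
  using t_pos[of i] by (simp add: dl_def)

lemma D_sub_edge: "h \<in> {1..n} \<Longrightarrow> Q \<subseteq> X h \<Longrightarrow> D Q = dl h Q"
proof -
  assume a: "h \<in> {1..n}" "Q \<subseteq> X h"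
  have "D Q = dl h Q + (\<Sum>i\<in>{1..n} - {h}. dl i Q)"
    unfolding D_def using a by (simp add: sum.remove)
  moreover have "(\<Sum>i\<in>{1..n} - {h}. dl i Q) = 0"
  proof (rule sum.neutral, rule ballI)
    fix i assume "i \<in> {1..n} - {h}"
    then show "dl i Q = 0" using H2card[OF a(1) _ _ a(2), of i] by (intro dl_small) auto
  qed
  ultimately show ?thesis by simp
qed

lemma D_sub_edge': "h \<in> {1..n} \<Longrightarrow> Q \<subseteq> X h \<Longrightarrow> D Q = int (card Q) - int (min (card Q) (t h))"
  using D_sub_edge by (simp add: dl_def Int_absorb2)

lemma D_nonneg: "0 \<le> D A" unfolding D_def by (intro sum_nonneg) (simp add: dl_nonneg)

end

context LS begin

lemma finA: "A \<subseteq> E \<Longrightarrow> finite A" using finE finite_subset by blast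

lemma dfc_nn: "m < k \<Longrightarrow> A \<subseteq> E \<Longrightarrow> 0 \<le> dfc m A" using dfc_nonneg finA by blast

lemma sum_dfc_small: "A \<subseteq> E \<Longrightarrow> card A \<le> 3 \<Longrightarrow> (\<Sum>j<k. dfc j A) = D A"
  using sum_dfc by blast

lemma sum_dfc_c: "h \<in> {1..n} \<Longrightarrow> P \<subseteq> X h \<Longrightarrow> card P \<le> t h + 1 \<Longrightarrow> (\<Sum>j<k. dfc j P) = D P"
proof -
  assume a: "h \<in> {1..n}" "P \<subseteq> X h" "card P \<le> t h + 1"
  have "cond_c n X t P" using a unfolding cond_c_def by blast
  moreover have "P \<subseteq> E" using a XE by blast
  ultimately show ?thesis using sum_dfc by blast
qed

lemma sum_ge1: "j < k \<Longrightarrow> (\<And>m. m < k \<Longrightarrow> 0 \<le> f m) \<Longrightarrow> f j \<le> (\<Sum>m<k. (f m :: int))"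
  by (rule member_le_sum) auto

lemma sum_ge_set: "M \<subseteq> {..<k} \<Longrightarrow> (\<And>m. m < k \<Longrightarrow> 0 \<le> f m) \<Longrightarrow> sum f M \<le> (\<Sum>m<k. (f m :: int))"
  by (rule sum_mono2) auto

lemma sum_ge2: "j < k \<Longrightarrow> j' < k \<Longrightarrow> j \<noteq> j' \<Longrightarrow> (\<And>m. m < k \<Longrightarrow> 0 \<le> f m) \<Longrightarrow>
   f j + f j' \<le> (\<Sum>m<k. (f m :: int))"
  using sum_ge_set[of "{j,j'}" f] by simp

lemma sum_ge3: "j1 < k \<Longrightarrow> j2 < k \<Longrightarrow> j3 < k \<Longrightarrow> j1 \<noteq> j2 \<Longrightarrow> j1 \<noteq> j3 \<Longrightarrow> j2 \<noteq> j3 \<Longrightarrow>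
   (\<And>m. m < k \<Longrightarrow> 0 \<le> f m) \<Longrightarrow> f j1 + f j2 + f j3 \<le> (\<Sum>m<k. (f m :: int))"
  using sum_ge_set[of "{j1,j2,j3}" f] by simp

lemma sum_pos_ex: "1 \<le> (\<Sum>m<k. (f m :: int)) \<Longrightarrow> \<exists>m<k. 1 \<le> f m"
proof (rule ccontr)
  assume a: "1 \<le> (\<Sum>m<k. f m)" "\<not> (\<exists>m<k. 1 \<le> f m)"
  then have "(\<Sum>m<k. f m) \<le> (\<Sum>m<k. (0::int))" by (intro sum_mono) auto
  then show False using a by simp
qed

lemma D_pair: assumes "a \<in> E" "b \<in> E" "a \<noteq> b"
  shows "D {a,b} = (if \<exists>h\<in>{1..n}. a \<in> X h \<and> b \<in> X h \<and> t h = 1 then 1 else 0)"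
proof (cases "\<exists>h\<in>{1..n}. a \<in> X h \<and> b \<in> X h")
  case True
  then obtain h where h: "h \<in> {1..n}" "a \<in> X h" "b \<in> X h" by blast
  have "D {a,b} = int (card {a,b}) - int (min (card {a,b}) (t h))"
    using h by (intro D_sub_edge') auto
  also have "\<dots> = (if t h = 1 then 1 else 0)" using assms t_pos[OF h(1)] by auto
  also have "(t h = 1) = (\<exists>h\<in>{1..n}. a \<in> X h \<and> b \<in> X h \<and> t h = 1)"
  proof
    assume "t h = 1" then show "\<exists>h\<in>{1..n}. a \<in> X h \<and> b \<in> X h \<and> t h = 1" using h by blast
  next
    assume "\<exists>h\<in>{1..n}. a \<in> X h \<and> b \<in> X h \<and> t h = 1"
    then obtain h' where h': "h' \<in> {1..n}" "a \<in> X h'" "b \<in> X h'" "t h' = 1" by blast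
    have "h' = h"
    proof (rule ccontr)
      assume "h' \<noteq> h"
      then have "a = b" using H2e[of h' h a b] h h' by blast
      then show False using assms(3) by simp
    qed
    then show "t h = 1" using h' by simp
  qed
  finally show ?thesis by simp
next
  case False
  have "D {a,b} = (\<Sum>i\<in>{1..n}. 0)" unfolding D_def
  proof (rule sum.cong)
    fix i assume i: "i \<in> {1..n}"
    have "\<not> (a \<in> X i \<and> b \<in> X i)" using False i by blast
    then have "card ({a,b} \<inter> X i) \<le> 1"
    proof (cases "a \<in> X i")
      case True
      then have "{a,b} \<inter> X i = {a}" using \<open>\<not> (a \<in> X i \<and> b \<in> X i)\<close> by auto
      then show ?thesis by simp
    next
      case False
      then have "{a,b} \<inter> X i \<subseteq> {b}" by auto
      then have "card ({a,b} \<inter> X i) \<le> card {b}" by (intro card_mono) auto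
      then show ?thesis by simp
    qed
    then show "dl i {a,b} = 0" using dl_small i by blast
  qed simp
  then show ?thesis using False by auto
qed

lemma D_pair_le: "a \<in> E \<Longrightarrow> b \<in> E \<Longrightarrow> a \<noteq> b \<Longrightarrow> D {a,b} \<le> 1"
  using D_pair by simp

lemma D_pair_edge: "a \<in> E \<Longrightarrow> b \<in> E \<Longrightarrow> a \<noteq> b \<Longrightarrow> 1 \<le> D {a,b} \<Longrightarrow>
   \<exists>h\<in>{1..n}. a \<in> X h \<and> b \<in> X h \<and> t h = 1"
  using D_pair by (auto split: if_splits)

lemma dfc_pair: "j < k \<Longrightarrow> a \<in> E \<Longrightarrow> b \<in> E \<Longrightarrow> a \<noteq> b \<Longrightarrow> dfc j {a,b} = r j {a} + r j {b} - r j {a,b}"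
  by (simp add: dfc_def)

lemma par_D: assumes "j < k" "a \<in> E" "b \<in> E" "a \<noteq> b" "1 \<le> dfc j {a,b}"
  shows "r j {a} = 1" "r j {b} = 1" "r j {a,b} = 1"
proof -
  have m1: "r j {a} \<le> r j {a,b}" using assms by (intro r_mono) auto
  have m2: "r j {b} \<le> r j {a,b}" using assms by (intro r_mono) auto
  have "dfc j {a,b} = r j {a} + r j {b} - r j {a,b}" using dfc_pair assms by blast
  then show "r j {a} = 1" "r j {b} = 1" "r j {a,b} = 1"
    using m1 m2 assms(5) r_single[OF assms(1) assms(2)] r_single[OF assms(1) assms(3)] by auto
qed

lemma par_I: "j < k \<Longrightarrow> a \<in> E \<Longrightarrow> b \<in> E \<Longrightarrow> a \<noteq> b \<Longrightarrow> r j {a} = 1 \<Longrightarrow> r j {b} = 1 \<Longrightarrow> r j {a,b} \<le> 1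
   \<Longrightarrow> 1 \<le> dfc j {a,b}"
  using dfc_pair by simp

lemma par_trans: assumes "j < k" "a \<in> E" "b \<in> E" "c \<in> E" "a \<noteq> b" "b \<noteq> c" "a \<noteq> c"
  "1 \<le> dfc j {a,b}" "1 \<le> dfc j {b,c}" shows "1 \<le> dfc j {a,c}"
proof -
  have ab: "r j {a,b} = 1" "r j {a} = 1" "r j {b} = 1" using par_D[OF assms(1,2,3,5,8)] by auto
  have bc: "r j {b,c} = 1" "r j {c} = 1" using par_D[OF assms(1,3,4,6,9)] by auto
  have "r j ({a,b} \<union> {b,c}) + r j ({a,b} \<inter> {b,c}) \<le> r j {a,b} + r j {b,c}"
    using assms by (intro r_sub) auto
  moreover have "{a,b} \<union> {b,c} = {a,b,c}" by auto
  moreover have "{a,b} \<inter> {b,c} = {b}" using assms by auto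
  ultimately have "r j {a,b,c} \<le> 1" using ab bc by simp
  moreover have "r j {a,c} \<le> r j {a,b,c}" using assms by (intro r_mono) auto
  ultimately show ?thesis using assms ab bc by (intro par_I) auto
qed

lemma pair_unique: assumes "j < k" "j' < k" "a \<in> E" "b \<in> E" "a \<noteq> b"
  "1 \<le> dfc j {a,b}" "1 \<le> dfc j' {a,b}" shows "j = j'"
proof (rule ccontr)
  assume "j \<noteq> j'"
  then have "dfc j {a,b} + dfc j' {a,b} \<le> (\<Sum>m<k. dfc m {a,b})"
    using assms by (intro sum_ge2 dfc_nn) auto
  also have "\<dots> = D {a,b}" using assms by (intro sum_dfc_small) (auto simp: card_insert_if)
  also have "\<dots> \<le> 1" using D_pair_le assms by blast
  finally show False using assms by simp
qed

lemma pair_exists: assumes "a \<in> E" "b \<in> E" "a \<noteq> b" "h \<in> {1..n}" "a \<in> X h" "b \<in> X h" "t h = 1"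
  shows "\<exists>j<k. 1 \<le> dfc j {a,b}"
proof -
  have "D {a,b} = 1" using D_pair[OF assms(1-3)] assms by auto
  then have "(\<Sum>m<k. dfc m {a,b}) = 1" using assms by (subst sum_dfc_small) (auto simp: card_insert_if)
  then show ?thesis using sum_pos_ex by (metis order_refl)
qed

definition good :: "nat \<Rightarrow> nat \<Rightarrow> bool" where
  "good h j \<longleftrightarrow> j < k \<and> (\<forall>e\<in>X h. r j {e} = 1) \<and> (\<forall>Q. Q \<subseteq> X h \<and> card Q = t h + 1 \<longrightarrow> 1 \<le> dfc j Q)"

lemma edge_sum1: "h \<in> {1..n} \<Longrightarrow> Q \<subseteq> X h \<Longrightarrow> card Q = t h + 1 \<Longrightarrow> (\<Sum>m<k. dfc m Q) = 1"
  using sum_dfc_c[of h Q] D_sub_edge'[of h Q] by simp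

lemma small0: assumes "h \<in> {1..n}" "P \<subseteq> X h" "card P \<le> t h" "m < k" shows "dfc m P = 0"
proof -
  have "(\<Sum>m<k. dfc m P) = 0" using sum_dfc_c[of h P] D_sub_edge'[of h P] assms by simp
  moreover have "dfc m P \<le> (\<Sum>m<k. dfc m P)" using assms XE by (intro sum_ge1 dfc_nn) auto
  moreover have "0 \<le> dfc m P" using assms XE by (intro dfc_nn) auto
  ultimately show ?thesis by simp
qed

lemma bigcard: "h \<in> {1..n} \<Longrightarrow> t h \<noteq> 1 \<Longrightarrow> t h < card (X h)"
  using hT unfolding condT_def by blast

lemma bigcardB: "h \<in> {1..n} \<Longrightarrow> t h \<noteq> 1 \<Longrightarrow> Min (weight n X ` X h) \<le> t h"
  using hT unfolding condT_def by blast

lemma good_nl: "good h j \<Longrightarrow> e \<in> X h \<Longrightarrow> r j {e} = 1" by (simp add: good_def)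
lemma good_k: "good h j \<Longrightarrow> j < k" by (simp add: good_def)
lemma good_Q: "good h j \<Longrightarrow> Q \<subseteq> X h \<Longrightarrow> card Q = t h + 1 \<Longrightarrow> 1 \<le> dfc j Q" by (simp add: good_def)

lemma good_pair: "good h j \<Longrightarrow> t h = 1 \<Longrightarrow> a \<in> X h \<Longrightarrow> b \<in> X h \<Longrightarrow> a \<noteq> b \<Longrightarrow> 1 \<le> dfc j {a,b}"
  by (rule good_Q) auto

lemma good_unique: assumes "h \<in> {1..n}" "t h + 1 \<le> card (X h)" "good h j" "good h j'" shows "j = j'"
proof (rule ccontr)
  assume ne: "j \<noteq> j'"
  obtain Q where Q: "Q \<subseteq> X h" "card Q = t h + 1" using assms(2) by (meson obtain_subset_with_card_n)
  have "dfc j Q + dfc j' Q \<le> (\<Sum>m<k. dfc m Q)"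
    using assms ne Q XE by (intro sum_ge2 dfc_nn) (auto simp: good_def)
  also have "\<dots> = 1" using edge_sum1 assms Q by blast
  moreover have "1 \<le> dfc j Q" "1 \<le> dfc j' Q" using good_Q assms Q by auto
  ultimately show False by simp
qed

lemma goodA: assumes h: "h \<in> {1..n}" "t h = 1" "2 \<le> card (X h)" shows "\<exists>j. good h j"
proof -
  have XhE: "X h \<subseteq> E" using XE h by blast
  obtain Q2 where Q2: "Q2 \<subseteq> X h" "card Q2 = 2" using h(3) by (meson obtain_subset_with_card_n)
  then obtain a0 b0 where ab: "a0 \<in> X h" "b0 \<in> X h" "a0 \<noteq> b0"
    by (metis card_2_iff insert_subset)
  obtain j0 where j0: "j0 < k" "1 \<le> dfc j0 {a0,b0}" using pair_exists[of a0 b0 h] ab h XhE by auto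
  have c1: "1 \<le> dfc j0 {a0,b}" if b: "b \<in> X h" "b \<noteq> a0" for b
  proof (cases "b = b0")
    case True then show ?thesis using j0 by simp
  next
    case False
    obtain j' where j': "j' < k" "1 \<le> dfc j' {a0,b}" using pair_exists[of a0 b h] ab b h XhE by auto
    obtain j'' where j'': "j'' < k" "1 \<le> dfc j'' {b0,b}" using pair_exists[of b0 b h] ab b h XhE False by auto
    show ?thesis
    proof (rule ccontr)
      assume nc: "\<not> 1 \<le> dfc j0 {a0,b}"
      have n1: "j' \<noteq> j0" using nc j' by auto
      have n2: "j'' \<noteq> j0"
      proof
        assume "j'' = j0"
        then have "1 \<le> dfc j0 {a0,b}"
          using par_trans[of j0 a0 b0 b] j0 j'' ab b False XhE by auto
        then show False using nc by simp
      qed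
      have n3: "j'' \<noteq> j'"
      proof
        assume e: "j'' = j'"
        have "1 \<le> dfc j' {b,b0}" using j'' e by (simp add: insert_commute)
        then have "1 \<le> dfc j' {a0,b0}"
          using par_trans[of j' a0 b b0] j' ab b False XhE by auto
        then have "j' = j0" using pair_unique[of j' j0 a0 b0] j' j0 ab XhE by auto
        then show False using n1 by simp
      qed
      let ?T = "{a0,b0,b}"
      have TE: "?T \<subseteq> X h" using ab b by auto
      have cT: "card ?T = 3" using ab b False by auto
      have "dfc j0 {a0,b0} \<le> dfc j0 ?T" using j0 TE XhE by (intro dfc_mono) auto
      moreover have "dfc j' {a0,b} \<le> dfc j' ?T" using j' TE XhE by (intro dfc_mono) auto
      moreover have "dfc j'' {b0,b} \<le> dfc j'' ?T" using j'' TE XhE by (intro dfc_mono) auto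
      moreover have "dfc j0 ?T + dfc j' ?T + dfc j'' ?T \<le> (\<Sum>m<k. dfc m ?T)"
        using j0 j' j'' n1 n2 n3 TE XhE by (intro sum_ge3 dfc_nn) auto
      moreover have "(\<Sum>m<k. dfc m ?T) = D ?T" using TE XhE cT by (intro sum_dfc_small) auto
      moreover have "D ?T = 2" using D_sub_edge'[OF h(1) TE] cT h(2) by simp
      ultimately show False using j0 j' j'' by linarith
    qed
  qed
  have c2: "1 \<le> dfc j0 {a,b}" if b: "a \<in> X h" "b \<in> X h" "a \<noteq> b" for a b
  proof -
    consider "a = a0" | "b = a0" | "a \<noteq> a0" "b \<noteq> a0" by blast
    then show ?thesis
    proof cases
      case 1 then show ?thesis using c1 b by auto
    next
      case 2 then show ?thesis using c1[of a] b by (auto simp: insert_commute)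
    next
      case 3
      have "1 \<le> dfc j0 {a,a0}" using c1[of a] b 3 by (auto simp: insert_commute)
      then show ?thesis using par_trans[of j0 a a0 b] c1[of b] 3 b ab j0 XhE by auto
    qed
  qed
  have "good h j0" unfolding good_def
  proof (intro conjI ballI allI impI)
    show "j0 < k" by fact
  next
    fix e assume e: "e \<in> X h"
    show "r j0 {e} = 1"
    proof (cases "e = a0")
      case True then show ?thesis using par_D(1)[OF j0(1) _ _ ab(3) j0(2)] ab XhE by auto
    next
      case False then show ?thesis using par_D(2)[OF j0(1) _ _ _ c1[of e]] ab e XhE by auto
    qed
  next
    fix Q assume Q: "Q \<subseteq> X h \<and> card Q = t h + 1"
    then obtain a b where "Q = {a,b}" "a \<noteq> b" using h(2) by (metis card_2_iff one_add_one)
    then show "1 \<le> dfc j0 Q" using c2 Q by auto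
  qed
  then show ?thesis by blast
qed

end

context LS begin

lemma uniq_pos: assumes "(\<Sum>m<k. f m) = (1::int)" "\<And>m. m < k \<Longrightarrow> 0 \<le> f m"
  shows "\<exists>!m. m < k \<and> 1 \<le> f m"
proof -
  obtain m where m: "m < k" "1 \<le> f m" using sum_pos_ex assms(1) by (metis order_refl)
  have "m' = m" if "m' < k" "1 \<le> f m'" for m'
  proof (rule ccontr)
    assume "m' \<noteq> m"
    then have "f m + f m' \<le> (\<Sum>m<k. f m)" using m that assms by (intro sum_ge2) auto
    then show False using assms m that by simp
  qed
  then show ?thesis using m by blast
qed

lemma ex_Q_with: assumes "e \<in> X h" "s + 1 \<le> card (X h)" "finite (X h)"
  shows "\<exists>Q. Q \<subseteq> X h \<and> card Q = s + 1 \<and> e \<in> Q"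
proof -
  have "card (X h - {e}) = card (X h) - 1" using assms by simp
  then have "s \<le> card (X h - {e})" using assms by simp
  then obtain S where S: "S \<subseteq> X h - {e}" "card S = s" by (meson obtain_subset_with_card_n)
  have fS: "finite S" using S assms finite_subset by blast
  have "e \<notin> S" using S by auto
  then have "card (insert e S) = s + 1" using S fS by simp
  then show ?thesis using S assms by (intro exI[of _ "insert e S"]) auto
qed

lemma circuit_nl: assumes "h \<in> {1..n}" "Q \<subseteq> X h" "card Q = t h + 1" "m < k" "1 \<le> dfc m Q" "z \<in> Q"
  shows "r m {z} = 1"
proof -
  have QE: "Q \<subseteq> E" using assms XE by blast
  have fQ: "finite Q" using QE finA by blast
  have "dfc m (Q - {z}) = 0" using assms fQ by (intro small0[of h]) auto
  moreover have "dfc m (insert z (Q - {z})) \<le> dfc m (Q - {z}) + r m {z}"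
    using assms QE fQ by (intro dfc_insert) auto
  moreover have "insert z (Q - {z}) = Q" using assms by auto
  ultimately have "1 \<le> r m {z}" using assms by simp
  then show ?thesis using r_single_le[of m z] assms QE by auto
qed

lemma W_lemma: assumes "h \<in> {1..n}" "W \<subseteq> X h" "card W = t h + 2" "z1 \<in> W" "z2 \<in> W" "z1 \<noteq> z2"
  "m < k" "1 \<le> dfc m (W - {z1})" "1 \<le> dfc m (W - {z2})" "z \<in> W"
  shows "1 \<le> dfc m (W - {z})"
proof -
  have WE: "W \<subseteq> E" using assms XE by blast
  have fW: "finite W" using WE finA by blast
  have "dfc m (W - {z1}) + dfc m (W - {z2}) \<le> dfc m ((W - {z1}) \<union> (W - {z2})) + dfc m ((W - {z1}) \<inter> (W - {z2}))"
    using assms WE fW by (intro dfc_super) auto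
  moreover have "(W - {z1}) \<union> (W - {z2}) = W" using assms by auto
  moreover have "(W - {z1}) \<inter> (W - {z2}) = W - {z1,z2}" by auto
  moreover have "dfc m (W - {z1,z2}) = 0"
  proof -
    have "card (W - {z1,z2}) = t h" using assms fW by (simp add: card_Diff_subset)
    then show ?thesis using assms by (intro small0[of h]) auto
  qed
  ultimately have "2 \<le> dfc m W" using assms by simp
  moreover have "dfc m (insert z (W - {z})) \<le> dfc m (W - {z}) + r m {z}"
    using assms WE fW by (intro dfc_insert) auto
  moreover have "insert z (W - {z}) = W" using assms by auto
  moreover have "r m {z} \<le> 1" using assms WE r_single_le by blast
  ultimately show ?thesis by simp
qed

lemma weight_ge: assumes "e \<in> E" "M \<subseteq> {..<k}" "\<forall>m\<in>M. r m {e} = 1"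
  shows "card M \<le> weight n X e"
proof -
  have "int (card M) = (\<Sum>m\<in>M. r m {e})" using assms by simp
  also have "\<dots> \<le> (\<Sum>m<k. r m {e})" using assms by (intro sum_ge_set r_single_ge) auto
  also have "\<dots> = int (weight n X e)" using sum_r_single assms by blast
  finally show ?thesis by simp
qed

lemma goodB: assumes h: "h \<in> {1..n}" "t h \<noteq> 1" shows "\<exists>j. good h j"
proof -
  define s where "s = t h"
  have s2: "2 \<le> s" using t_pos[OF h(1)] h(2) s_def by simp
  have cX: "s + 1 \<le> card (X h)" using bigcard[OF h] s_def by simp
  have fX: "finite (X h)" using finX h by blast
  have XhE: "X h \<subseteq> E" using XE h by blast
  obtain e0 where e0: "e0 \<in> X h" "weight n X e0 \<le> s"
  proof -
    have "Min (weight n X ` X h) \<in> weight n X ` X h" using fX Xne[OF h(1)] by (intro Min_in) auto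
    then show ?thesis using that bigcardB[OF h] s_def by auto
  qed
  define J where "J Q = (THE m. m < k \<and> 1 \<le> dfc m Q)" for Q
  have Jp: "J Q < k \<and> 1 \<le> dfc (J Q) Q" and Ju: "\<And>m. m < k \<Longrightarrow> 1 \<le> dfc m Q \<Longrightarrow> m = J Q"
    if Q: "Q \<subseteq> X h" "card Q = s + 1" for Q
  proof -
    have "\<exists>!m. m < k \<and> 1 \<le> dfc m Q"
      using Q h XhE s_def by (intro uniq_pos edge_sum1 dfc_nn) auto
    then show "J Q < k \<and> 1 \<le> dfc (J Q) Q" "\<And>m. m < k \<Longrightarrow> 1 \<le> dfc m Q \<Longrightarrow> m = J Q"
      unfolding J_def by (metis (mono_tags, lifting) theI')+
  qed
  have B3: "J (W - {z1}) = J (W - {z2})"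
    if W: "W \<subseteq> X h" "card W = s + 2" "e0 \<in> W" "z1 \<in> W" "z2 \<in> W" for W z1 z2
  proof (rule ccontr)
    assume ne: "J (W - {z1}) \<noteq> J (W - {z2})"
    have fW: "finite W" using W fX finite_subset by blast
    have cWz: "card (W - {z}) = s + 1" if "z \<in> W" for z using W fW that by simp
    have sWz: "W - {z} \<subseteq> X h" for z using W by auto
    have inj: "inj_on (\<lambda>z. J (W - {z})) W"
    proof (rule inj_onI, rule ccontr)
      fix z z' assume zz: "z \<in> W" "z' \<in> W" "J (W - {z}) = J (W - {z'})" "z \<noteq> z'"
      let ?m = "J (W - {z})"
      have m1: "?m < k" "1 \<le> dfc ?m (W - {z})" using Jp[OF sWz cWz[OF zz(1)]] by auto
      have "1 \<le> dfc (J (W - {z'})) (W - {z'})" using Jp[OF sWz cWz[OF zz(2)]] by auto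
      then have m2: "1 \<le> dfc ?m (W - {z'})" using zz(3) by simp
      have "1 \<le> dfc ?m (W - {y})" if "y \<in> W" for y
        using W_lemma[of h W z z' ?m y] h W zz m1 m2 that s_def by auto
      then have "?m = J (W - {z1})" "?m = J (W - {z2})"
        using Ju[OF sWz cWz] m1 W by auto
      then show False using ne by simp
    qed
    let ?M = "(\<lambda>z. J (W - {z})) ` (W - {e0})"
    have "card ?M = card (W - {e0})" using inj by (intro card_image) (auto intro: inj_on_subset)
    also have "\<dots> = s + 1" using W fW by simp
    finally have cM: "card ?M = s + 1" .
    have "card ?M \<le> weight n X e0"
    proof (rule weight_ge)
      show "e0 \<in> E" using e0 XhE by auto
      show "?M \<subseteq> {..<k}" using Jp[OF sWz cWz] by auto
      show "\<forall>m\<in>?M. r m {e0} = 1"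
      proof
        fix m assume "m \<in> ?M"
        then obtain z where z: "z \<in> W" "z \<noteq> e0" "m = J (W - {z})" by auto
        show "r m {e0} = 1"
          using circuit_nl[of h "W - {z}" m e0] Jp[OF sWz cWz[OF z(1)]] z h W s_def sWz cWz by auto
      qed
    qed
    then show False using cM e0 by simp
  qed
  obtain Q0 where Q0: "Q0 \<subseteq> X h" "card Q0 = s + 1" "e0 \<in> Q0" using ex_Q_with[OF e0(1) cX fX] by blast
  have B4: "\<forall>Q. Q \<subseteq> X h \<and> card Q = s + 1 \<and> e0 \<in> Q \<and> card (Q - Q0) = d \<longrightarrow> J Q = J Q0" for d
  proof (induction d rule: less_induct)
    case (less d)
    show ?case
    proof (intro allI impI)
      fix Q assume Q: "Q \<subseteq> X h \<and> card Q = s + 1 \<and> e0 \<in> Q \<and> card (Q - Q0) = d"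
      have fQ: "finite Q" using Q fX finite_subset by blast
      have fQ0: "finite Q0" using Q0 fX finite_subset by blast
      show "J Q = J Q0"
      proof (cases "Q = Q0")
        case True then show ?thesis by simp
      next
        case False
        have "\<not> Q \<subseteq> Q0"
        proof
          assume "Q \<subseteq> Q0"
          then have "Q = Q0" using Q Q0 fQ0 by (intro card_subset_eq) auto
          then show False using False by simp
        qed
        then obtain x where x: "x \<in> Q" "x \<notin> Q0" by blast
        have "\<not> Q0 \<subseteq> Q"
        proof
          assume "Q0 \<subseteq> Q"
          then have "Q0 = Q" using Q Q0 fQ by (intro card_subset_eq) auto
          then show False using False by simp
        qed
        then obtain y where y: "y \<in> Q0" "y \<notin> Q" by blast
        define W where "W = insert y Q"
        have W: "W \<subseteq> X h" "card W = s + 2" "e0 \<in> W" "x \<in> W" "y \<in> W"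
          using Q Q0 x y fQ unfolding W_def by auto
        have e1: "W - {y} = Q" using y unfolding W_def by auto
        define Q' where "Q' = W - {x}"
        have Q'p: "Q' \<subseteq> X h" "card Q' = s + 1" "e0 \<in> Q'"
          using W x Q0 Q fQ unfolding Q'_def W_def by (auto simp: card_insert_if)
        have "Q' - Q0 = (Q - Q0) - {x}" unfolding Q'_def W_def using y by auto
        moreover have "0 < card (Q - Q0)" using x fQ by (auto simp: card_gt_0_iff)
        ultimately have "card (Q' - Q0) < d" using Q x fQ by (simp add: card_Diff1_less)
        then have "J Q' = J Q0" using less Q'p by blast
        moreover have "J Q = J Q'" using B3[OF W(1-3) W(5) W(4)] e1 unfolding Q'_def by simp
        ultimately show ?thesis by simp
      qed
    qed
  qed
  have B5: "J Q = J Q0" if Q: "Q \<subseteq> X h" "card Q = s + 1" for Q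
  proof (cases "e0 \<in> Q")
    case True then show ?thesis using B4 Q by blast
  next
    case False
    have fQ: "finite Q" using Q fX finite_subset by blast
    have "Q \<noteq> {}" using Q by auto
    then obtain x where x: "x \<in> Q" by blast
    define W where "W = insert e0 Q"
    have W: "W \<subseteq> X h" "card W = s + 2" "e0 \<in> W" "x \<in> W"
      using Q e0 x fQ False unfolding W_def by auto
    have "J (W - {e0}) = J (W - {x})" using B3[OF W(1-3)] W by blast
    moreover have "W - {e0} = Q" using False unfolding W_def by auto
    moreover have "J (W - {x}) = J Q0"
    proof -
      have "W - {x} \<subseteq> X h" "e0 \<in> W - {x}" using W x False by auto
      moreover have "card (W - {x}) = s + 1" using W fQ x unfolding W_def by simp
      ultimately show ?thesis using B4 by blast
    qed
    ultimately show ?thesis by simp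
  qed
  have "good h (J Q0)" unfolding good_def
  proof (intro conjI ballI allI impI)
    show "J Q0 < k" using Jp[OF Q0(1,2)] by simp
  next
    fix e assume e: "e \<in> X h"
    obtain Q where Q: "Q \<subseteq> X h" "card Q = s + 1" "e \<in> Q" using ex_Q_with[OF e cX fX] by blast
    show "r (J Q0) {e} = 1"
      using circuit_nl[of h Q "J Q0" e] Jp[OF Q(1,2)] B5[OF Q(1,2)] Q h s_def by auto
  next
    fix Q assume "Q \<subseteq> X h \<and> card Q = t h + 1"
    then show "1 \<le> dfc (J Q0) Q" using Jp B5 s_def by metis
  qed
  then show ?thesis by blast
qed

end

context LS begin

lemma good_ex: "h \<in> {1..n} \<Longrightarrow> t h + 1 \<le> card (X h) \<Longrightarrow> \<exists>j. good h j"
  using goodA goodB by (cases "t h = 1") auto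

definition col0 :: "nat \<Rightarrow> nat" where "col0 h = (SOME j. good h j)"

lemma good_col0: "h \<in> {1..n} \<Longrightarrow> t h + 1 \<le> card (X h) \<Longrightarrow> good h (col0 h)"
  unfolding col0_def using good_ex by (meson someI_ex)

lemma col0_eq: "h \<in> {1..n} \<Longrightarrow> t h + 1 \<le> card (X h) \<Longrightarrow> good h j \<Longrightarrow> col0 h = j"
  using good_col0 good_unique by blast

lemma dfc_nl: "j < k \<Longrightarrow> P \<subseteq> E \<Longrightarrow> \<forall>e\<in>P. r j {e} = 1 \<Longrightarrow> dfc j P = int (card P) - r j P"
proof -
  assume a: "j < k" "P \<subseteq> E" "\<forall>e\<in>P. r j {e} = 1"
  have "(\<Sum>e\<in>P. r j {e}) = (\<Sum>e\<in>P. 1)" using a by (intro sum.cong) auto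
  then show ?thesis by (simp add: dfc_def)
qed

lemma good_rank_gen: assumes h: "h \<in> {1..n}" and g: "good h j"
  shows "\<forall>P. P \<subseteq> X h \<and> t h + 1 \<le> card P \<and> card P = c \<longrightarrow> r j P \<le> int (t h)"
proof (induction c rule: less_induct)
  case (less c)
  show ?case
  proof (intro allI impI)
    fix P assume P: "P \<subseteq> X h \<and> t h + 1 \<le> card P \<and> card P = c"
    have PE: "P \<subseteq> E" using P XE h by blast
    have fP: "finite P" using PE finA by blast
    have jk: "j < k" using g good_k by blast
    have nlP: "\<forall>e\<in>P. r j {e} = 1" using P g good_nl by blast
    have dP: "dfc j P = int (card P) - r j P" using dfc_nl[OF jk PE nlP] .
    show "r j P \<le> int (t h)"
    proof (cases "card P = t h + 1")
      case True
      then have "1 \<le> dfc j P" using g P good_Q by blast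
      then show ?thesis using dP True by simp
    next
      case False
      then have cP: "t h + 2 \<le> card P" using P by simp
      obtain Q2 where Q2: "Q2 \<subseteq> P" "card Q2 = 2" using cP by (meson obtain_subset_with_card_n le_add2 le_trans)
      then obtain x y where xy: "x \<in> P" "y \<in> P" "x \<noteq> y" by (metis card_2_iff insert_subset)
      have cx: "card (P - {x}) = card P - 1" using xy fP by simp
      have cy: "card (P - {y}) = card P - 1" using xy fP by simp
      have "P - {x} \<subseteq> X h \<and> t h + 1 \<le> card (P - {x}) \<and> card (P - {x}) = card P - 1"
        using P cP cx by auto
      then have rx: "r j (P - {x}) \<le> int (t h)"
        using less.IH[of "card P - 1"] P cP by auto
      have "P - {y} \<subseteq> X h \<and> t h + 1 \<le> card (P - {y}) \<and> card (P - {y}) = card P - 1"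
        using P cP cy by auto
      then have ry: "r j (P - {y}) \<le> int (t h)"
        using less.IH[of "card P - 1"] P cP by auto
      have "r j ((P - {x}) \<union> (P - {y})) + r j ((P - {x}) \<inter> (P - {y})) \<le> r j (P - {x}) + r j (P - {y})"
        using jk PE by (intro r_sub) auto
      moreover have "(P - {x}) \<union> (P - {y}) = P" using xy by auto
      moreover have "(P - {x}) \<inter> (P - {y}) = P - {x,y}" by auto
      moreover have "int (t h) \<le> r j (P - {x,y})"
      proof -
        have "card (P - {x,y}) = card P - 2" using xy fP by (simp add: card_Diff_subset)
        then have "t h \<le> card (P - {x,y})" using cP by simp
        then obtain S where S: "S \<subseteq> P - {x,y}" "card S = t h" by (meson obtain_subset_with_card_n)
        have SE: "S \<subseteq> E" using S PE by blast
        have "dfc j S = 0" using S P h jk by (intro small0[of h]) auto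
        moreover have "dfc j S = int (card S) - r j S" using nlP S SE jk by (intro dfc_nl) auto
        moreover have "r j S \<le> r j (P - {x,y})" using S PE jk by (intro r_mono) auto
        ultimately show ?thesis using S by simp
      qed
      ultimately show ?thesis using rx ry by simp
    qed
  qed
qed

lemma good_rank: assumes h: "h \<in> {1..n}" and g: "good h j" and P: "P \<subseteq> X h"
  shows "r j P \<le> int (t h)"
proof (cases "t h + 1 \<le> card P")
  case True then show ?thesis using good_rank_gen[OF h g] P by blast
next
  case False
  have "r j P \<le> int (card P)" using g good_k P XE h r_card by (meson subset_trans)
  then show ?thesis using False by simp
qed

lemma D_ge3: assumes "i1 \<in> {1..n}" "i2 \<in> {1..n}" "i3 \<in> {1..n}" "i1 \<noteq> i2" "i1 \<noteq> i3" "i2 \<noteq> i3"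
  "1 \<le> dl i1 Q" "1 \<le> dl i2 Q" "1 \<le> dl i3 Q" shows "3 \<le> D Q"
proof -
  have "sum (\<lambda>i. dl i Q) {i1,i2,i3} \<le> sum (\<lambda>i. dl i Q) {1..n}"
    using assms by (intro sum_mono2) (auto simp: dl_nonneg)
  then show ?thesis using assms unfolding D_def by simp
qed

lemma dl_ge1: assumes "i \<in> {1..n}" "t i = 1" "a \<noteq> b" "a \<in> Q" "b \<in> Q" "a \<in> X i" "b \<in> X i" "finite Q"
  shows "1 \<le> dl i Q"
proof -
  have "card {a,b} \<le> card (Q \<inter> X i)" using assms by (intro card_mono) auto
  then have "2 \<le> card (Q \<inter> X i)" using assms by simp
  then show ?thesis using assms by (simp add: dl_def)
qed

lemma other_pos: assumes "j < k" "f j + 1 \<le> (\<Sum>m<k. (f m :: int))" shows "\<exists>m<k. m \<noteq> j \<and> 1 \<le> f m"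
proof (rule ccontr)
  assume a: "\<not> (\<exists>m<k. m \<noteq> j \<and> 1 \<le> f m)"
  have "(\<Sum>m<k. f m) = f j + (\<Sum>m\<in>{..<k} - {j}. f m)" using assms(1) by (rule_tac sum.remove) auto
  moreover have "(\<Sum>m\<in>{..<k} - {j}. f m) \<le> (\<Sum>m\<in>{..<k} - {j}. 0)" using a by (intro sum_mono) auto
  ultimately show False using assms(2) by simp
qed

lemma card_le1I: "finite S \<Longrightarrow> (\<And>a b. a \<in> S \<Longrightarrow> b \<in> S \<Longrightarrow> a = b) \<Longrightarrow> card S \<le> 1"
  using card_le_Suc0_iff_eq[of S] by (metis One_nat_def)

end

context LS begin

lemma tri: assumes hs: "h1 \<in> {1..n}" "h2 \<in> {1..n}" "h3 \<in> {1..n}" "h1 \<noteq> h2" "h1 \<noteq> h3" "h2 \<noteq> h3"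
    "t h1 = 1" "t h2 = 1" "t h3 = 1"
  and g: "good h1 j" "good h2 j" "good h3 j"
  and ps: "p \<in> X h1" "p \<in> X h2" "q \<in> X h1" "q \<in> X h3" "u \<in> X h2" "u \<in> X h3" "x \<in> X h1"
    "p \<noteq> q" "p \<noteq> u" "q \<noteq> u" "x \<noteq> p" "x \<noteq> q"
  shows False
proof -
  have uh1: "u \<notin> X h1" using H2e[of h1 h2 p u] hs ps by blast
  have ph3: "p \<notin> X h3" using H2e[of h1 h3 p q] hs ps by blast
  have qh2: "q \<notin> X h2" using H2e[of h1 h2 p q] hs ps by blast
  have xh2: "x \<notin> X h2" using H2e[of h1 h2 p x] hs ps by blast
  have xh3: "x \<notin> X h3" using H2e[of h1 h3 q x] hs ps by blast
  have xu: "x \<noteq> u" using uh1 ps by blast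
  have inE: "p \<in> E" "q \<in> E" "u \<in> E" "x \<in> E" using XE hs ps by blast+
  have jk: "j < k" using g good_k by blast
  define A where "A = {p,q,u,x}"
  have AE: "A \<subseteq> E" using inE A_def by auto
  have fA: "finite A" unfolding A_def by simp
  have cA: "card A = 4" unfolding A_def using ps xu by auto
  have nl: "\<forall>e\<in>A. r j {e} = 1" unfolding A_def using g ps good_nl by blast
  have rX1: "r j (X h1) \<le> 1" using good_rank[OF hs(1) g(1)] hs by simp
  have rpu: "r j {p,u} \<le> 1" using good_rank[OF hs(2) g(2)] hs ps by simp
  have rp: "r j {p} = 1" using nl A_def by simp
  have "r j (X h1 \<union> {p,u}) + r j (X h1 \<inter> {p,u}) \<le> r j (X h1) + r j {p,u}"
    using jk XE hs inE by (intro r_sub) auto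
  moreover have "X h1 \<inter> {p,u} = {p}" using ps uh1 by auto
  ultimately have "r j (X h1 \<union> {p,u}) \<le> 1" using rX1 rpu rp by simp
  moreover have "r j A \<le> r j (X h1 \<union> {p,u})" using jk XE hs inE ps unfolding A_def by (intro r_mono) auto
  ultimately have rA: "r j A \<le> 1" by simp
  have dA: "3 \<le> dfc j A" using dfc_nl[OF jk AE nl] rA cA by simp
  have rsub: "r j P \<le> 1" if "P \<subseteq> A" for P using r_mono[OF jk that AE] rA by simp
  define Y where "Y = {p,q,x}"
  have YA: "Y \<subseteq> A" unfolding Y_def A_def by auto
  have YE: "Y \<subseteq> E" using YA AE by blast
  have YX: "Y \<subseteq> X h1" unfolding Y_def using ps by auto
  have cY: "card Y = 3" unfolding Y_def using ps by auto
  have DY: "D Y = 2" using D_sub_edge'[OF hs(1) YX] cY hs by simp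
  have nlY: "\<forall>e\<in>Y. r j {e} = 1" using nl YA by blast
  have dY: "2 \<le> dfc j Y" using dfc_nl[OF jk YE nlY] rsub[OF YA] cY by simp
  have Y0: "dfc m Y = 0" if "m < k" "m \<noteq> j" for m
  proof -
    have "dfc j Y + dfc m Y \<le> (\<Sum>m<k. dfc m Y)" using jk that YE by (intro sum_ge2 dfc_nn) auto
    also have "\<dots> = 2" using sum_dfc_small[OF YE] cY DY by simp
    finally show ?thesis using dY dfc_nn[OF that(1) YE] by simp
  qed
  have P0: "dfc m {a,b} = 0" if "a \<in> A" "b \<in> A" "a \<noteq> b" "m < k" "m \<noteq> j" for a b m
  proof -
    have PE: "{a,b} \<subseteq> E" using that AE by auto
    have nlP: "\<forall>e\<in>{a,b}. r j {e} = 1" using nl that by blast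
    have "1 \<le> dfc j {a,b}" using dfc_nl[OF jk PE nlP] that rsub[of "{a,b}"] by simp
    moreover have "dfc j {a,b} + dfc m {a,b} \<le> (\<Sum>m<k. dfc m {a,b})" using jk that PE by (intro sum_ge2 dfc_nn) auto
    moreover have "(\<Sum>m<k. dfc m {a,b}) = D {a,b}" using PE by (intro sum_dfc_small) (auto simp: card_insert_if)
    moreover have "D {a,b} \<le> 1" using D_pair_le that PE by auto
    ultimately show ?thesis using dfc_nn[OF that(4) PE] by simp
  qed
  obtain g' where g': "g' \<in> {1..n}" "x \<in> X g'" "u \<in> X g'" "t g' = 1"
  proof -
    have PE: "{x,u} \<subseteq> E" using inE by auto
    have nlP: "\<forall>e\<in>{x,u}. r j {e} = 1" using nl unfolding A_def by blast
    have "1 \<le> dfc j {x,u}" using dfc_nl[OF jk PE nlP] rsub[of "{x,u}"] xu unfolding A_def by simp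
    moreover have "dfc j {x,u} \<le> (\<Sum>m<k. dfc m {x,u})" using jk PE by (intro sum_ge1 dfc_nn) auto
    moreover have "(\<Sum>m<k. dfc m {x,u}) = D {x,u}" using PE by (intro sum_dfc_small) (auto simp: card_insert_if)
    ultimately have "1 \<le> D {x,u}" by simp
    then show ?thesis using D_pair_edge[of x u] inE xu that by blast
  qed
  have g'1: "g' \<noteq> h1" using g' uh1 by auto
  have g'2: "g' \<noteq> h2" using g' xh2 by auto
  have g'3: "g' \<noteq> h3" using g' xh3 by auto
  have trip: "\<exists>m<k. m \<noteq> j \<and> 1 \<le> dfc m Q"
    if Q: "Q \<subseteq> A" "card Q = 3" "u \<in> Q" "3 \<le> D Q" for Q
  proof -
    have QE: "Q \<subseteq> E" using Q AE by blast
    have "r j {u} \<le> r j Q" using jk Q QE by (intro r_mono) auto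
    moreover have "r j {u} = 1" using nl A_def by simp
    moreover have nlQ: "\<forall>e\<in>Q. r j {e} = 1" using nl Q by blast
    ultimately have "dfc j Q \<le> 2" using dfc_nl[OF jk QE nlQ] Q by simp
    moreover have "(\<Sum>m<k. dfc m Q) = D Q" using QE Q by (intro sum_dfc_small) auto
    ultimately show ?thesis using Q other_pos[OF jk, of "\<lambda>m. dfc m Q"] by simp
  qed
  define Q1 where "Q1 = {p,q,u}"
  define Q2 where "Q2 = {p,x,u}"
  define Q3 where "Q3 = {q,x,u}"
  have Qs: "Q1 \<subseteq> A" "Q2 \<subseteq> A" "Q3 \<subseteq> A" "card Q1 = 3" "card Q2 = 3" "card Q3 = 3"
    "u \<in> Q1" "u \<in> Q2" "u \<in> Q3"
    unfolding Q1_def Q2_def Q3_def A_def using ps xu by auto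
  have "3 \<le> D Q1"
  proof (rule D_ge3[of h1 h2 h3])
    show "1 \<le> dl h1 Q1" using dl_ge1[of h1 p q Q1] hs ps unfolding Q1_def by simp
    show "1 \<le> dl h2 Q1" using dl_ge1[of h2 p u Q1] hs ps unfolding Q1_def by simp
    show "1 \<le> dl h3 Q1" using dl_ge1[of h3 q u Q1] hs ps unfolding Q1_def by simp
  qed (use hs in auto)
  then obtain m1 where m1: "m1 < k" "m1 \<noteq> j" "1 \<le> dfc m1 Q1" using trip Qs by blast
  have "3 \<le> D Q2"
  proof (rule D_ge3[of h1 h2 g'])
    show "1 \<le> dl h1 Q2" using dl_ge1[of h1 p x Q2] hs ps unfolding Q2_def by simp
    show "1 \<le> dl h2 Q2" using dl_ge1[of h2 p u Q2] hs ps unfolding Q2_def by simp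
    show "1 \<le> dl g' Q2" using dl_ge1[of g' x u Q2] g' xu unfolding Q2_def by simp
  qed (use hs g' g'1 g'2 in auto)
  then obtain m2 where m2: "m2 < k" "m2 \<noteq> j" "1 \<le> dfc m2 Q2" using trip Qs by blast
  have "3 \<le> D Q3"
  proof (rule D_ge3[of h1 h3 g'])
    show "1 \<le> dl h1 Q3" using dl_ge1[of h1 q x Q3] hs ps unfolding Q3_def by simp
    show "1 \<le> dl h3 Q3" using dl_ge1[of h3 q u Q3] hs ps unfolding Q3_def by simp
    show "1 \<le> dl g' Q3" using dl_ge1[of g' x u Q3] g' xu unfolding Q3_def by simp
  qed (use hs g' g'1 g'3 in auto)
  then obtain m3 where m3: "m3 < k" "m3 \<noteq> j" "1 \<le> dfc m3 Q3" using trip Qs by blast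
  have two: "False" if tw: "m < k" "m \<noteq> j" "Qa \<subseteq> A" "Qb \<subseteq> A" "Qa \<union> Qb = A" "Qa \<inter> Qb = {a,b}"
    "a \<in> A" "b \<in> A" "a \<noteq> b" "1 \<le> dfc m Qa" "1 \<le> dfc m Qb" for m Qa Qb a b
  proof -
    have "dfc m Qa + dfc m Qb \<le> dfc m (Qa \<union> Qb) + dfc m (Qa \<inter> Qb)"
      using tw AE fA by (intro dfc_super) (auto intro: finite_subset)
    then have "2 \<le> dfc m A" using tw P0[of a b m] by simp
    moreover have "A = insert u Y" unfolding A_def Y_def by auto
    moreover have "dfc m (insert u Y) \<le> dfc m Y + r m {u}"
      using tw YE inE uh1 YX by (intro dfc_insert) (auto simp: Y_def)
    moreover have "r m {u} \<le> 1" using r_single_le tw inE by blast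
    ultimately show False using Y0[OF tw(1,2)] by simp
  qed
  have n12: "m1 \<noteq> m2"
  proof
    assume e: "m1 = m2"
    show False using two[of m1 Q1 Q2 p u] m1 m2 e Qs ps unfolding Q1_def Q2_def A_def by auto
  qed
  have n13: "m1 \<noteq> m3"
  proof
    assume e: "m1 = m3"
    show False using two[of m1 Q1 Q3 q u] m1 m3 e Qs ps unfolding Q1_def Q3_def A_def by auto
  qed
  have n23: "m2 \<noteq> m3"
  proof
    assume e: "m2 = m3"
    show False using two[of m2 Q2 Q3 x u] m2 m3 e Qs ps xu unfolding Q2_def Q3_def A_def by auto
  qed
  have "1 \<le> dfc m1 A" using m1 dfc_mono[OF m1(1) Qs(1) fA AE] by simp
  moreover have "1 \<le> dfc m2 A" using m2 dfc_mono[OF m2(1) Qs(2) fA AE] by simp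
  moreover have "1 \<le> dfc m3 A" using m3 dfc_mono[OF m3(1) Qs(3) fA AE] by simp
  moreover have "sum (\<lambda>m. dfc m A) {j,m1,m2,m3} \<le> (\<Sum>m<k. dfc m A)"
    using jk m1 m2 m3 AE by (intro sum_ge_set dfc_nn) auto
  moreover have "sum (\<lambda>m. dfc m A) {j,m1,m2,m3} = dfc j A + dfc m1 A + dfc m2 A + dfc m3 A"
    using m1 m2 m3 n12 n13 n23 by simp
  ultimately have S6: "6 \<le> (\<Sum>m<k. dfc m A)" using dA by simp
  have condb: "cond_b n X t A"
    unfolding cond_b_def
  proof (intro conjI)
    show "card A = 4" by fact
    have s1: "{l \<in> {h1,h2,h3}. x \<in> X l} = {h1}" using ps xh2 xh3 by auto
    have s2: "{l \<in> {h1,h2,h3}. p \<in> X l} = {h1,h2}" using ps ph3 by auto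
    have s3: "{l \<in> {h1,h2,h3}. q \<in> X l} = {h1,h3}" using ps qh2 by auto
    have s4: "{l \<in> {h1,h2,h3}. u \<in> X l} = {h2,h3}" using ps uh1 by auto
    have "A - {x} = {p,q,u}" unfolding A_def using ps xu by auto
    then have "\<forall>b\<in>A - {x}. card {l \<in> {h1, h2, h3}. b \<in> X l} = 2" using s2 s3 s4 hs by auto
    moreover have "card {l \<in> {h1,h2,h3}. x \<in> X l} = 1" using s1 by simp
    moreover have "x \<in> A" unfolding A_def by simp
    ultimately show "\<exists>h\<in>{1..n}. \<exists>i\<in>{1..n}. \<exists>j\<in>{1..n}. h \<noteq> i \<and> h \<noteq> j \<and> i \<noteq> j \<and>
        t h = 1 \<and> t i = 1 \<and> t j = 1 \<and>
        (\<exists>a\<in>A. card {l \<in> {h, i, j}. a \<in> X l} = 1 \<and>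
                 (\<forall>b\<in>A - {a}. card {l \<in> {h, i, j}. b \<in> X l} = 2))"
      using hs by blast
  qed
  have SD: "(\<Sum>m<k. dfc m A) = D A" using sum_dfc[OF AE] condb by blast
  have DA: "D A \<le> 5"
  proof -
    define R where "R = {1..n} - {h1,h2,h3}"
    have split: "D A = (\<Sum>i\<in>R. dl i A) + (\<Sum>i\<in>{h1,h2,h3}. dl i A)"
      unfolding D_def R_def using hs by (intro sum.subset_diff) auto
    have "(\<Sum>i\<in>{h1,h2,h3}. dl i A) = dl h1 A + dl h2 A + dl h3 A" using hs by simp
    moreover have "A \<inter> X h1 = {p,q,x}" unfolding A_def using ps uh1 by auto
    moreover have "A \<inter> X h2 = {p,u}" unfolding A_def using ps qh2 xh2 by auto
    moreover have "A \<inter> X h3 = {q,u}" unfolding A_def using ps ph3 xh3 by auto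
    ultimately have s3: "(\<Sum>i\<in>{h1,h2,h3}. dl i A) = 4" using hs ps xu by (simp add: dl_def)
    have pt: "dl i A \<le> (if x \<in> X i \<and> u \<in> X i then 1 else 0)" if i: "i \<in> R" for i
    proof -
      have i1: "i \<in> {1..n}" "i \<noteq> h1" "i \<noteq> h2" "i \<noteq> h3" using i R_def by auto
      have cYi: "card (Y \<inter> X i) \<le> 1" using H2card[OF hs(1) i1(1) _ YX] i1 by auto
      have fi: "finite (Y \<inter> X i)" unfolding Y_def by simp
      have sub: "A \<inter> X i \<subseteq> insert u (Y \<inter> X i)" unfolding A_def Y_def by auto
      have "card (A \<inter> X i) \<le> card (insert u (Y \<inter> X i))" using sub fi by (intro card_mono) auto
      also have "\<dots> \<le> Suc (card (Y \<inter> X i))" using fi by (simp add: card_insert_if)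
      finally have c2: "card (A \<inter> X i) \<le> 2" using cYi by simp
      show ?thesis
      proof (cases "x \<in> X i \<and> u \<in> X i")
        case True
        then show ?thesis using c2 t_pos[OF i1(1)] by (simp add: dl_def)
      next
        case False
        have "card (A \<inter> X i) \<le> 1"
        proof (cases "u \<in> X i")
          case True
          have "p \<notin> X i" using H2e[of i h2 p u] i1 hs ps True by blast
          moreover have "q \<notin> X i" using H2e[of i h3 q u] i1 hs ps True by blast
          ultimately have "A \<inter> X i = {u}" unfolding A_def using True False by auto
          then show ?thesis by simp
        next
          case False
          then have "A \<inter> X i = Y \<inter> X i" unfolding A_def Y_def by auto
          then show ?thesis using cYi by simp
        qed
        then have "dl i A = 0" using dl_small i1(1) by blast
        then show ?thesis using False by simp
      qed
    qed
    have "(\<Sum>i\<in>R. dl i A) \<le> (\<Sum>i\<in>R. if x \<in> X i \<and> u \<in> X i then 1 else 0)"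
      using pt by (intro sum_mono) auto
    also have "\<dots> = int (card {i \<in> R. x \<in> X i \<and> u \<in> X i})"
      unfolding R_def by (rule cnt) simp
    also have "\<dots> \<le> 1"
    proof -
      have "card {i \<in> R. x \<in> X i \<and> u \<in> X i} \<le> 1"
      proof (rule card_le1I)
        show "finite {i \<in> R. x \<in> X i \<and> u \<in> X i}" unfolding R_def by simp
      next
        fix a b assume ab: "a \<in> {i \<in> R. x \<in> X i \<and> u \<in> X i}" "b \<in> {i \<in> R. x \<in> X i \<and> u \<in> X i}"
        show "a = b"
        proof (rule ccontr)
          assume "a \<noteq> b"
          then have "x = u" using H2e[of a b x u] ab unfolding R_def by blast
          then show False using xu by simp
        qed
      qed
      then show ?thesis by simp
    qed
    finally show ?thesis using split s3 by simp
  qed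
  show False using S6 SD DA by simp
qed

end

context LS begin

lemma other_elem: assumes "finite S" "2 \<le> card S" "e \<in> S" shows "\<exists>a\<in>S. a \<noteq> e"
proof -
  have "card (S - {e}) = card S - 1" using assms by simp
  then have "card (S - {e}) \<ge> 1" using assms(2) by simp
  then have "S - {e} \<noteq> {}" by (metis card.empty not_one_le_zero)
  then show ?thesis by blast
qed

lemma AA: assumes hh: "h \<in> {1..n}" "h' \<in> {1..n}" "h \<noteq> h'" "t h = 1" "t h' = 1"
  "2 \<le> card (X h)" "2 \<le> card (X h')" and e: "e \<in> X h" "e \<in> X h'" and g: "good h j" "good h' j"
  shows False
proof -
  have jk: "j < k" using g good_k by blast
  obtain a where a: "a \<in> X h" "a \<noteq> e" using other_elem[of "X h" e] finX hh e by blast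
  obtain b where b: "b \<in> X h'" "b \<noteq> e" using other_elem[of "X h'" e] finX hh e by blast
  have ah': "a \<notin> X h'" using H2e[of h h' e a] hh e a by blast
  have bh: "b \<notin> X h" using H2e[of h h' e b] hh e b by blast
  have ab: "a \<noteq> b" using a bh by blast
  have inE: "a \<in> E" "b \<in> E" "e \<in> E" using XE hh a b e by blast+
  have "1 \<le> dfc j {a,e}" using good_pair[OF g(1) hh(4) a(1) e(1) a(2)] .
  moreover have "1 \<le> dfc j {e,b}" using good_pair[OF g(2) hh(5) e(2) b(1)] b by simp
  ultimately have dab: "1 \<le> dfc j {a,b}" using par_trans[OF jk inE(1) inE(3) inE(2)] a b ab by simp
  have PE: "{a,b} \<subseteq> E" using inE by simp
  have "dfc j {a,b} \<le> (\<Sum>m<k. dfc m {a,b})" using jk PE by (intro sum_ge1 dfc_nn) auto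
  also have "\<dots> = D {a,b}" using PE by (intro sum_dfc_small) (auto simp: card_insert_if)
  finally obtain g0 where g0: "g0 \<in> {1..n}" "a \<in> X g0" "b \<in> X g0" "t g0 = 1"
    using D_pair_edge[OF inE(1,2) ab] dab by force
  have gh: "g0 \<noteq> h" using g0 bh by blast
  have gh': "g0 \<noteq> h'" using g0 ah' by blast
  have cg: "2 \<le> card (X g0)"
  proof -
    have "card {a,b} \<le> card (X g0)" using g0 finX by (intro card_mono) auto
    then show ?thesis using ab by simp
  qed
  have gg: "good g0 j"
  proof -
    have gc: "good g0 (col0 g0)" using good_col0 g0 cg by simp
    have "1 \<le> dfc (col0 g0) {a,b}" using good_pair[OF gc g0(4) g0(2) g0(3) ab] .
    then have "col0 g0 = j" using pair_unique[of "col0 g0" j a b] gc good_k jk inE ab dab by blast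
    then show ?thesis using gc by simp
  qed
  have nq: "h \<noteq> g0" "h' \<noteq> g0" "e \<noteq> a" "e \<noteq> b" "h' \<noteq> h" "b \<noteq> a" using gh gh' a b hh ab by auto
  have c4i: "X h = {e,a}" if "\<not> (\<exists>x\<in>X h. x \<noteq> e \<and> x \<noteq> a)" using that a e by auto
  have c4ii: "X h' = {e,b}" if "\<not> (\<exists>x\<in>X h'. x \<noteq> e \<and> x \<noteq> b)" using that b e by auto
  have c4iii: "X g0 = {a,b}" if "\<not> (\<exists>x\<in>X g0. x \<noteq> a \<and> x \<noteq> b)" using that g0 by auto
  consider (c1) "\<exists>x\<in>X h. x \<noteq> e \<and> x \<noteq> a" | (c2) "\<exists>x\<in>X h'. x \<noteq> e \<and> x \<noteq> b"
    | (c3) "\<exists>x\<in>X g0. x \<noteq> a \<and> x \<noteq> b"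
    | (c4) "X h = {e,a}" "X h' = {e,b}" "X g0 = {a,b}"
    using c4i c4ii c4iii by argo
  then show False
  proof cases
    case c1
    then obtain x where x: "x \<in> X h" "x \<noteq> e" "x \<noteq> a" by blast
    show False by (rule tri[OF hh(1) hh(2) g0(1) hh(3) nq(1) nq(2) hh(4) hh(5) g0(4) g(1) g(2) gg
      e(1) e(2) a(1) g0(2) b(1) g0(3) x(1) nq(3) nq(4) ab x(2) x(3)])
  next
    case c2
    then obtain x where x: "x \<in> X h'" "x \<noteq> e" "x \<noteq> b" by blast
    show False by (rule tri[OF hh(2) hh(1) g0(1) nq(5) nq(2) nq(1) hh(5) hh(4) g0(4) g(2) g(1) gg
      e(2) e(1) b(1) g0(3) a(1) g0(2) x(1) nq(4) nq(3) nq(6) x(2) x(3)])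
  next
    case c3
    then obtain x where x: "x \<in> X g0" "x \<noteq> a" "x \<noteq> b" by blast
    show False by (rule tri[OF g0(1) hh(1) hh(2) gh gh' hh(3) g0(4) hh(4) hh(5) gg g(1) g(2)
      g0(2) a(1) g0(3) b(1) e(1) e(2) x(1) ab a(2) b(2) x(2) x(3)])
  next
    case c4
    have i1: "{e,a} \<in> X ` {1..n}" using c4(1) hh(1) by (metis image_eqI)
    have i2: "{e,b} \<in> X ` {1..n}" using c4(2) hh(2) by (metis image_eqI)
    have i3: "{a,b} \<in> X ` {1..n}" using c4(3) g0(1) by (metis image_eqI)
    have "\<exists>a'\<in>E. \<exists>b'\<in>E. \<exists>c'\<in>E. a' \<noteq> b' \<and> a' \<noteq> c' \<and> b' \<noteq> c' \<and>
      {a', b'} \<in> X ` {1..n} \<and> {a', c'} \<in> X ` {1..n} \<and> {b', c'} \<in> X ` {1..n}"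
    proof (intro bexI conjI)
      show "e \<noteq> a" "e \<noteq> b" "a \<noteq> b" using a b ab by auto
    qed (use i1 i2 i3 inE in auto)
    then show False using h3 unfolding H3_def by blast
  qed
qed

end

context LS begin

lemma dfc_family: assumes "m < k" "finite I" "A \<subseteq> E" "\<forall>i\<in>I. P i \<subseteq> A"
  "\<forall>i\<in>I. \<forall>i'\<in>I. i \<noteq> i' \<longrightarrow> P i \<inter> P i' = {}"
  shows "(\<Sum>i\<in>I. dfc m (P i)) \<le> dfc m A"
proof -
  have fA: "finite A" using assms finA by blast
  have "(\<Sum>i\<in>I. dfc m (P i)) \<le> dfc m (\<Union>i\<in>I. P i)" using assms(2,4,5)
  proof (induction I rule: finite_induct)
    case empty then show ?case using dfc_empty[OF assms(1)] by simp
  next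
    case (insert i I)
    have p1: "\<forall>i\<in>I. P i \<subseteq> A" using insert.prems(1) by blast
    have p2: "\<forall>i\<in>I. \<forall>i'\<in>I. i \<noteq> i' \<longrightarrow> P i \<inter> P i' = {}" using insert.prems(2) by blast
    have IH: "(\<Sum>i\<in>I. dfc m (P i)) \<le> dfc m (\<Union>i\<in>I. P i)" using insert.IH p1 p2 by blast
    have "\<forall>i'\<in>I. P i \<inter> P i' = {}"
    proof
      fix i' assume "i' \<in> I"
      then have "i \<noteq> i'" using insert.hyps(2) by blast
      then show "P i \<inter> P i' = {}" using insert.prems(2) \<open>i' \<in> I\<close> by blast
    qed
    then have d: "P i \<inter> (\<Union>i\<in>I. P i) = {}" by blast
    have s1: "P i \<subseteq> A" "(\<Union>i\<in>I. P i) \<subseteq> A" using insert by auto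
    have "dfc m (P i) + dfc m (\<Union>i\<in>I. P i) \<le> dfc m (P i \<union> (\<Union>i\<in>I. P i))"
      using s1 d assms(1,3) fA by (intro dfc_disj) (auto intro: finite_subset)
    then show ?case using IH insert by simp
  qed
  also have "\<dots> \<le> dfc m A" using assms fA by (intro dfc_mono) auto
  finally show ?thesis .
qed

lemma mixed: assumes hh: "h \<in> {1..n}" "h' \<in> {1..n}" "h \<noteq> h'" "t h + 1 \<le> card (X h)" "2 \<le> t h'"
  and e: "e \<in> X h" "e \<in> X h'" and g: "good h j" "good h' j"
  and HA: "\<And>g. g \<in> {1..n} \<Longrightarrow> g \<noteq> h \<Longrightarrow> t g = 1 \<Longrightarrow> 2 \<le> card (X g) \<Longrightarrow> X g \<inter> X h \<noteq> {} \<Longrightarrow> \<not> good g j"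
  and AAp: "\<And>g g' m. g \<in> {1..n} \<Longrightarrow> g' \<in> {1..n} \<Longrightarrow> g \<noteq> g' \<Longrightarrow> t g = 1 \<Longrightarrow> t g' = 1 \<Longrightarrow>
       2 \<le> card (X g) \<Longrightarrow> 2 \<le> card (X g') \<Longrightarrow> X g \<inter> X g' \<noteq> {} \<Longrightarrow> good g m \<Longrightarrow> good g' m \<Longrightarrow> False"
  shows False
proof -
  define s where "s = t h"
  define s' where "s' = t h'"
  have jk: "j < k" using g good_k by blast
  have fXh: "finite (X h)" "finite (X h')" using finX hh by auto
  have cXh': "s' + 1 \<le> card (X h')" using bigcard[OF hh(2)] hh(5) s'_def by simp
  have "card (X h - {e}) = card (X h) - 1" using e fXh by simp
  then have "s \<le> card (X h - {e})" using hh(4) s_def by simp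
  then obtain T where T: "T \<subseteq> X h - {e}" "card T = s" by (meson obtain_subset_with_card_n)
  have "card (X h' - {e}) = card (X h') - 1" using e fXh by simp
  then have "s' \<le> card (X h' - {e})" using cXh' by simp
  then obtain T' where T': "T' \<subseteq> X h' - {e}" "card T' = s'" by (meson obtain_subset_with_card_n)
  have fT: "finite T" "finite T'" using T T' fXh finite_subset by blast+
  have hT': "T' \<inter> X h = {}"
  proof (rule ccontr)
    assume "T' \<inter> X h \<noteq> {}"
    then obtain y where y: "y \<in> T'" "y \<in> X h" by blast
    then have "y = e" using H2e[of h h' y e] hh e T' by blast
    then show False using y T' by blast
  qed
  have h'T: "T \<inter> X h' = {}"
  proof (rule ccontr)
    assume "T \<inter> X h' \<noteq> {}"
    then obtain y where y: "y \<in> T" "y \<in> X h'" by blast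
    then have "y = e" using H2e[of h h' y e] hh e T by blast
    then show False using y T by blast
  qed
  have TT': "T \<inter> T' = {}" using hT' T by blast
  define A where "A = T \<union> T'"
  have AE: "A \<subseteq> E" using T T' XE hh unfolding A_def by blast
  have fA: "finite A" using fT unfolding A_def by simp
  have cA: "card A = s + s'" using fT TT' T T' unfolding A_def by (simp add: card_Un_disjoint)
  have AXh: "A \<inter> X h = T" using T hT' unfolding A_def by blast
  have AXh': "A \<inter> X h' = T'" using T' h'T unfolding A_def by blast
  have nl: "\<forall>y\<in>A. r j {y} = 1" using T T' g good_nl unfolding A_def by blast
  have rT: "r j (insert e T) \<le> int s"
  proof -
    have sub: "insert e T \<subseteq> X h" using T e by blast
    have "e \<notin> T" using T by blast
    then have c: "card (insert e T) = t h + 1" using T fT s_def by simp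
    have "1 \<le> dfc j (insert e T)" using good_Q[OF g(1) sub c] .
    moreover have "\<forall>y\<in>insert e T. r j {y} = 1" using sub g good_nl by blast
    moreover have "insert e T \<subseteq> E" using sub XE hh by blast
    ultimately show ?thesis using dfc_nl[OF jk] c s_def by fastforce
  qed
  have rT': "r j (insert e T') \<le> int s'"
  proof -
    have sub: "insert e T' \<subseteq> X h'" using T' e by blast
    have "e \<notin> T'" using T' by blast
    then have c: "card (insert e T') = t h' + 1" using T' fT s'_def by simp
    have "1 \<le> dfc j (insert e T')" using good_Q[OF g(2) sub c] .
    moreover have "\<forall>y\<in>insert e T'. r j {y} = 1" using sub g good_nl by blast
    moreover have "insert e T' \<subseteq> E" using sub XE hh by blast
    ultimately show ?thesis using dfc_nl[OF jk] c s'_def by fastforce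
  qed
  have eE: "e \<in> E" using e XE hh by blast
  have s1: "r j (insert e T \<union> insert e T') + r j (insert e T \<inter> insert e T') \<le> r j (insert e T) + r j (insert e T')"
    using jk AE eE unfolding A_def by (intro r_sub) auto
  have s2: "insert e T \<inter> insert e T' = {e}" using TT' by blast
  have s3: "r j {e} = 1" using g e good_nl by blast
  have s4: "r j A \<le> r j (insert e T \<union> insert e T')"
    using jk AE eE unfolding A_def by (intro r_mono) auto
  have "r j (insert e T \<inter> insert e T') = 1" unfolding s2 by (rule s3)
  then have "r j A \<le> int s + int s' - 1" using rT rT' s1 s4 by linarith
  then have dA: "1 \<le> dfc j A" using dfc_nl[OF jk AE nl] cA by simp
  define G where "G = {g \<in> {1..n}. g \<noteq> h \<and> g \<noteq> h' \<and> t g = 1 \<and> T \<inter> X g \<noteq> {} \<and> T' \<inter> X g \<noteq> {}}"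
  have fG: "finite G" unfolding G_def by simp
  have c2: "card (A \<inter> X i) \<le> 2" if i: "i \<in> {1..n}" "i \<noteq> h" "i \<noteq> h'" for i
  proof -
    have "card (T \<inter> X i) \<le> 1" using H2card[OF hh(1) i(1) _ ] i T by auto
    moreover have "card (T' \<inter> X i) \<le> 1" using H2card[OF hh(2) i(1) _ ] i T' by auto
    moreover have "A \<inter> X i = (T \<inter> X i) \<union> (T' \<inter> X i)" unfolding A_def by blast
    moreover have "card ((T \<inter> X i) \<union> (T' \<inter> X i)) \<le> card (T \<inter> X i) + card (T' \<inter> X i)" by (rule card_Un_le)
    ultimately show ?thesis by simp
  qed
  have c1: "card (A \<inter> X i) \<le> 1" if i: "i \<in> {1..n}" "i \<noteq> h" "i \<noteq> h'" "T \<inter> X i = {} \<or> T' \<inter> X i = {}" for i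
  proof -
    have "card (T \<inter> X i) \<le> 1" using H2card[OF hh(1) i(1) _ ] i T by auto
    moreover have "card (T' \<inter> X i) \<le> 1" using H2card[OF hh(2) i(1) _ ] i T' by auto
    moreover have "A \<inter> X i = (T \<inter> X i) \<union> (T' \<inter> X i)" unfolding A_def by blast
    ultimately show ?thesis using i(4) by auto
  qed
  have pt: "dl i A \<le> (if i \<in> G then 1 else 0)" if i: "i \<in> {1..n}" for i
  proof (cases "i = h \<or> i = h'")
    case True
    then have "dl i A = 0" using AXh AXh' T T' s_def s'_def by (auto simp: dl_def)
    then show ?thesis by simp
  next
    case False
    then have ni: "i \<noteq> h" "i \<noteq> h'" by auto
    show ?thesis
    proof (cases "t i = 1 \<and> T \<inter> X i \<noteq> {} \<and> T' \<inter> X i \<noteq> {}")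
      case True
      then have "i \<in> G" unfolding G_def using i ni by blast
      then show ?thesis using c2[OF i ni] True by (simp add: dl_def)
    next
      case False
      then consider "t i \<noteq> 1" | "T \<inter> X i = {} \<or> T' \<inter> X i = {}" by blast
      then have "dl i A = 0"
      proof cases
        case 1
        then have "2 \<le> t i" using t_pos[OF i] by simp
        then show ?thesis using c2[OF i ni] by (simp add: dl_def)
      next
        case 2
        then show ?thesis using c1[OF i ni] dl_small[OF i] by blast
      qed
      then show ?thesis by simp
    qed
  qed
  have DA: "D A \<le> int (card G)"
  proof -
    have "D A \<le> (\<Sum>i\<in>{1..n}. if i \<in> G then 1 else 0)" unfolding D_def using pt by (intro sum_mono) auto
    also have "\<dots> = int (card {i \<in> {1..n}. i \<in> G})" by (rule cnt) simp
    also have "{i \<in> {1..n}. i \<in> G} = G" unfolding G_def by auto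
    finally show ?thesis .
  qed
  have Gp: "A \<inter> X g0 \<subseteq> X g0 \<and> card (A \<inter> X g0) = 2 \<and> 2 \<le> card (X g0) \<and> col0 g0 \<noteq> j \<and> col0 g0 < k \<and>
      good g0 (col0 g0) \<and> 1 \<le> dfc (col0 g0) (A \<inter> X g0)" if gG: "g0 \<in> G" for g0
  proof -
    have g0: "g0 \<in> {1..n}" "g0 \<noteq> h" "g0 \<noteq> h'" "t g0 = 1" "T \<inter> X g0 \<noteq> {}" "T' \<inter> X g0 \<noteq> {}"
      using gG unfolding G_def by auto
    obtain x where x: "x \<in> T" "x \<in> X g0" using g0 by blast
    obtain y where y: "y \<in> T'" "y \<in> X g0" using g0 by blast
    have xy: "x \<noteq> y" using x y TT' by blast
    have "card {x,y} \<le> card (A \<inter> X g0)" using x y fA unfolding A_def by (intro card_mono) auto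
    then have cge: "2 \<le> card (A \<inter> X g0)" using xy by simp
    have cP: "card (A \<inter> X g0) = 2" using cge c2[OF g0(1-3)] by simp
    have cXg: "2 \<le> card (X g0)"
    proof -
      have "card (A \<inter> X g0) \<le> card (X g0)" using finX[OF g0(1)] by (intro card_mono) auto
      then show ?thesis using cP by simp
    qed
    have gc: "good g0 (col0 g0)" using good_col0[OF g0(1)] g0(4) cXg by simp
    have "X g0 \<inter> X h \<noteq> {}" using x T by blast
    then have "\<not> good g0 j" using HA[OF g0(1) g0(2) g0(4) cXg] by blast
    then have "col0 g0 \<noteq> j" using gc by auto
    moreover have "1 \<le> dfc (col0 g0) (A \<inter> X g0)" using good_Q[OF gc] cP g0(4) by simp
    ultimately show ?thesis using gc good_k cP cXg by blast
  qed
  have fib: "int (card {g \<in> G. col0 g = m}) \<le> dfc m A" if m: "m < k" for m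
  proof -
    let ?I = "{g \<in> G. col0 g = m}"
    have "int (card ?I) = (\<Sum>g\<in>?I. 1)" by simp
    also have "\<dots> \<le> (\<Sum>g\<in>?I. dfc m (A \<inter> X g))" using Gp by (intro sum_mono) auto
    also have "\<dots> \<le> dfc m A"
    proof (rule dfc_family[OF m])
      show "finite ?I" using fG by simp
      show "A \<subseteq> E" by fact
      show "\<forall>i\<in>?I. A \<inter> X i \<subseteq> A" by blast
      show "\<forall>i\<in>?I. \<forall>i'\<in>?I. i \<noteq> i' \<longrightarrow> A \<inter> X i \<inter> (A \<inter> X i') = {}"
      proof (intro ballI impI)
        fix g1 g2 assume gs: "g1 \<in> ?I" "g2 \<in> ?I" "g1 \<noteq> g2"
        show "A \<inter> X g1 \<inter> (A \<inter> X g2) = {}"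
        proof (rule ccontr)
          assume "A \<inter> X g1 \<inter> (A \<inter> X g2) \<noteq> {}"
          then have ne: "X g1 \<inter> X g2 \<noteq> {}" by blast
          have "g1 \<in> {1..n}" "g2 \<in> {1..n}" "t g1 = 1" "t g2 = 1" using gs unfolding G_def by auto
          moreover have "2 \<le> card (X g1)" "good g1 m" using Gp[of g1] gs by auto
          moreover have "2 \<le> card (X g2)" "good g2 m" using Gp[of g2] gs by auto
          ultimately show False using AAp[of g1 g2 m] gs(3) ne by blast
        qed
      qed
    qed
    finally show ?thesis .
  qed
  have "card G = (\<Sum>m\<in>{..<k} - {j}. card {g \<in> G. col0 g = m})"
  proof -
    have "(\<Sum>m\<in>{..<k} - {j}. \<Sum>g\<in>{g \<in> G. col0 g = m}. (1::nat)) = (\<Sum>g\<in>G. 1)"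
      using fG Gp by (intro sum.group) auto
    then show ?thesis by simp
  qed
  then have "int (card G) = (\<Sum>m\<in>{..<k} - {j}. int (card {g \<in> G. col0 g = m}))" by simp
  also have "\<dots> \<le> (\<Sum>m\<in>{..<k} - {j}. dfc m A)" using fib by (intro sum_mono) auto
  finally have cG: "int (card G) \<le> (\<Sum>m\<in>{..<k} - {j}. dfc m A)" .
  have "(\<Sum>m<k. dfc m A) = dfc j A + (\<Sum>m\<in>{..<k} - {j}. dfc m A)" using jk by (rule_tac sum.remove) auto
  then have S: "1 + int (card G) \<le> (\<Sum>m<k. dfc m A)" using cG dA by simp
  have "cond_d n X t A" unfolding cond_d_def
  proof (intro bexI conjI)
    show "X h \<inter> X h' \<noteq> {}" using e by blast
    show "A \<subseteq> (X h - X h') \<union> (X h' - X h)" using T T' hT' h'T unfolding A_def by blast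
    show "card (A \<inter> X h) \<le> t h" using AXh T s_def by simp
    show "card (A \<inter> X h') \<le> t h'" using AXh' T' s'_def by simp
  qed (use hh in auto)
  then have "(\<Sum>m<k. dfc m A) = D A" using sum_dfc[OF AE] by blast
  then show False using S DA by simp
qed

end

context LS begin

lemma AAp: "g \<in> {1..n} \<Longrightarrow> g' \<in> {1..n} \<Longrightarrow> g \<noteq> g' \<Longrightarrow> t g = 1 \<Longrightarrow> t g' = 1 \<Longrightarrow>
       2 \<le> card (X g) \<Longrightarrow> 2 \<le> card (X g') \<Longrightarrow> X g \<inter> X g' \<noteq> {} \<Longrightarrow> good g m \<Longrightarrow> good g' m \<Longrightarrow> False"
  using AA by blast

lemma AB_prop: assumes "h \<in> {1..n}" "h' \<in> {1..n}" "h \<noteq> h'" "t h = 1" "2 \<le> card (X h)" "2 \<le> t h'"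
  "X h \<inter> X h' \<noteq> {}" "good h j" "good h' j" shows False
proof -
  obtain e where e: "e \<in> X h" "e \<in> X h'" using assms(7) by blast
  show False
  proof (rule mixed[OF assms(1,2,3) _ assms(6) e assms(8,9)])
    show "t h + 1 \<le> card (X h)" using assms by simp
  next
    fix g assume g: "g \<in> {1..n}" "g \<noteq> h" "t g = 1" "2 \<le> card (X g)" "X g \<inter> X h \<noteq> {}"
    show "\<not> good g j"
    proof
      assume "good g j"
      then show False using AAp[OF g(1) assms(1) g(2) g(3) assms(4) g(4) assms(5) g(5)] assms(8) by blast
    qed
  next
    fix g g' m assume "g \<in> {1..n}" "g' \<in> {1..n}" "g \<noteq> g'" "t g = 1" "t g' = 1"
       "2 \<le> card (X g)" "2 \<le> card (X g')" "X g \<inter> X g' \<noteq> {}" "good g m" "good g' m"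
    then show False using AAp by blast
  qed
qed

lemma BB_prop: assumes "h \<in> {1..n}" "h' \<in> {1..n}" "h \<noteq> h'" "2 \<le> t h" "2 \<le> t h'"
  "X h \<inter> X h' \<noteq> {}" "good h j" "good h' j" shows False
proof -
  obtain e where e: "e \<in> X h" "e \<in> X h'" using assms(6) by blast
  show False
  proof (rule mixed[OF assms(1,2,3) _ assms(5) e assms(7,8)])
    show "t h + 1 \<le> card (X h)" using bigcard[OF assms(1)] assms(4) by simp
  next
    fix g assume g: "g \<in> {1..n}" "g \<noteq> h" "t g = 1" "2 \<le> card (X g)" "X g \<inter> X h \<noteq> {}"
    show "\<not> good g j"
    proof
      assume "good g j"
      then show False using AB_prop[OF g(1) assms(1) g(2) g(3) g(4) assms(4) g(5)] assms(7) by blast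
    qed
  next
    fix g g' m assume "g \<in> {1..n}" "g' \<in> {1..n}" "g \<noteq> g'" "t g = 1" "t g' = 1"
       "2 \<le> card (X g)" "2 \<le> card (X g')" "X g \<inter> X g' \<noteq> {}" "good g m" "good g' m"
    then show False using AAp by blast
  qed
qed

lemma col0_proper: assumes "h \<in> {1..n}" "h' \<in> {1..n}" "h \<noteq> h'" "t h + 1 \<le> card (X h)" "t h' + 1 \<le> card (X h')"
  "X h \<inter> X h' \<noteq> {}" shows "col0 h \<noteq> col0 h'"
proof
  assume eq: "col0 h = col0 h'"
  have g1: "good h (col0 h)" using good_col0 assms by blast
  have g2: "good h' (col0 h)" using good_col0 assms eq by metis
  have tp: "1 \<le> t h" "1 \<le> t h'" using t_pos assms by auto
  consider "t h = 1" "t h' = 1" | "t h = 1" "2 \<le> t h'" | "2 \<le> t h" "t h' = 1" | "2 \<le> t h" "2 \<le> t h'"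
    using tp by linarith
  then show False
  proof cases
    case 1 then show False using AAp[OF assms(1,2,3)] assms g1 g2 by simp
  next
    case 2 then show False using AB_prop[OF assms(1,2,3)] assms g1 g2 by simp
  next
    case 3
    have "X h' \<inter> X h \<noteq> {}" using assms by blast
    then show False using AB_prop[OF assms(2,1)] assms 3 g1 g2 by simp
  next
    case 4 then show False using BB_prop[OF assms(1,2,3)] assms g1 g2 by simp
  qed
qed

lemma typeC: assumes "h \<in> {1..n}" "\<not> t h + 1 \<le> card (X h)" shows "t h = 1" "\<exists>a. X h = {a}"
proof -
  show t1: "t h = 1" using bigcard[OF assms(1)] assms(2) by fastforce
  have "card (X h) \<le> 1" using assms(2) t1 by simp
  moreover have "card (X h) \<noteq> 0" using finX[OF assms(1)] Xne[OF assms(1)] by simp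
  ultimately have "card (X h) = 1" by simp
  then show "\<exists>a. X h = {a}" by (rule card_1_singletonE) blast
qed

lemma card_nl: "a \<in> E \<Longrightarrow> card {m \<in> {..<k}. r m {a} = 1} = weight n X a"
proof -
  assume aE: "a \<in> E"
  have "int (weight n X a) = (\<Sum>m<k. r m {a})" using sum_r_single aE by simp
  also have "\<dots> = (\<Sum>m<k. if r m {a} = 1 then 1 else 0)"
    using r_single aE by (intro sum.cong) force+
  also have "\<dots> = int (card {m \<in> {..<k}. r m {a} = 1})" by (rule cnt) simp
  finally show ?thesis by simp
qed

lemma colC_ex: assumes h: "h \<in> {1..n}" "X h = {a}"
  shows "\<exists>j. j < k \<and> (\<forall>e\<in>X h. r j {e} = 1) \<and> (\<forall>g\<in>{1..n}. g \<noteq> h \<longrightarrow> X g \<inter> X h \<noteq> {} \<longrightarrow> j \<noteq> col0 g)"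
proof -
  have aE: "a \<in> E" using XE h by blast
  let ?L = "{m \<in> {..<k}. r m {a} = 1}"
  let ?Gs = "{g \<in> {1..n}. g \<noteq> h \<and> a \<in> X g}"
  let ?B = "col0 ` ?Gs"
  have "?Gs = {i \<in> {1..n}. a \<in> X i} - {h}" by auto
  then have "card ?Gs = weight n X a - 1" using h unfolding weight_def by (simp add: card_Diff_singleton)
  moreover have "1 \<le> weight n X a" using weight_pos h by simp
  moreover have "card ?B \<le> card ?Gs" by (rule card_image_le) simp
  ultimately have "card ?B < card ?L" using card_nl[OF aE] by simp
  moreover have "finite ?B" by simp
  ultimately have "\<not> ?L \<subseteq> ?B" using card_mono[of ?B ?L] by linarith
  then obtain j where j: "j \<in> ?L" "j \<notin> ?B" by blast
  have "\<forall>g\<in>{1..n}. g \<noteq> h \<longrightarrow> X g \<inter> X h \<noteq> {} \<longrightarrow> j \<noteq> col0 g"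
  proof (intro ballI impI)
    fix g assume g: "g \<in> {1..n}" "g \<noteq> h" "X g \<inter> X h \<noteq> {}"
    then have "g \<in> ?Gs" using h by auto
    then show "j \<noteq> col0 g" using j by auto
  qed
  then show ?thesis using j h by auto
qed

definition col :: "nat \<Rightarrow> nat" where
  "col h = (if t h + 1 \<le> card (X h) then col0 h else
     (SOME j. j < k \<and> (\<forall>e\<in>X h. r j {e} = 1) \<and> (\<forall>g\<in>{1..n}. g \<noteq> h \<longrightarrow> X g \<inter> X h \<noteq> {} \<longrightarrow> j \<noteq> col0 g)))"

lemma col_C: assumes "h \<in> {1..n}" "\<not> t h + 1 \<le> card (X h)"
  shows "col h < k \<and> (\<forall>e\<in>X h. r (col h) {e} = 1) \<and> (\<forall>g\<in>{1..n}. g \<noteq> h \<longrightarrow> X g \<inter> X h \<noteq> {} \<longrightarrow> col h \<noteq> col0 g)"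
proof -
  obtain a where "X h = {a}" using typeC assms by blast
  then have "\<exists>j. j < k \<and> (\<forall>e\<in>X h. r j {e} = 1) \<and> (\<forall>g\<in>{1..n}. g \<noteq> h \<longrightarrow> X g \<inter> X h \<noteq> {} \<longrightarrow> j \<noteq> col0 g)"
    using colC_ex assms by blast
  then show ?thesis unfolding col_def using assms(2) by (simp only: if_False) (rule someI_ex)
qed

lemma col_AB: "h \<in> {1..n} \<Longrightarrow> t h + 1 \<le> card (X h) \<Longrightarrow> good h (col h)"
  unfolding col_def using good_col0 by simp

lemma col_k: "h \<in> {1..n} \<Longrightarrow> col h < k"
  using col_C col_AB good_k by blast

lemma col_nl: "h \<in> {1..n} \<Longrightarrow> e \<in> X h \<Longrightarrow> r (col h) {e} = 1"
  using col_C col_AB good_nl by blast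

lemma col_proper: assumes "h \<in> {1..n}" "h' \<in> {1..n}" "h \<noteq> h'" "X h \<inter> X h' \<noteq> {}" shows "col h \<noteq> col h'"
proof (cases "t h + 1 \<le> card (X h)")
  case True
  show ?thesis
  proof (cases "t h' + 1 \<le> card (X h')")
    case True2: True
    then show ?thesis using col0_proper[OF assms(1-3) True True2 assms(4)] True unfolding col_def by simp
  next
    case False
    have "X h \<inter> X h' \<noteq> {}" by fact
    then show ?thesis using col_C[OF assms(2) False] assms True unfolding col_def[of h] by auto
  qed
next
  case False
  show ?thesis
  proof (cases "t h' + 1 \<le> card (X h')")
    case True2: True
    have "X h' \<inter> X h \<noteq> {}" using assms by blast
    then show ?thesis using col_C[OF assms(1) False] assms True2 unfolding col_def[of h'] by auto
  next
    case False2: False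
    obtain a where a: "X h = {a}" using typeC assms False by blast
    obtain b where b: "X h' = {b}" using typeC assms False2 by blast
    have "X h = X h'" using a b assms(4) by auto
    then show ?thesis using Xinj assms by blast
  qed
qed

end


lemma reidx: "{i \<in> {1..k}. P i} = Suc ` {j \<in> {..<k}. P (Suc j)}"
proof
  show "{i \<in> {1..k}. P i} \<subseteq> Suc ` {j \<in> {..<k}. P (Suc j)}"
  proof
    fix i assume i: "i \<in> {i \<in> {1..k}. P i}"
    then have "i = Suc (i - 1)" by auto
    moreover have "i - 1 \<in> {j \<in> {..<k}. P (Suc j)}" using i by auto
    ultimately show "i \<in> Suc ` {j \<in> {..<k}. P (Suc j)}" by blast
  qed
qed auto

lemma card_reidx: "card {i \<in> {1..k}. P i} = card {j \<in> {..<k}. P (Suc j)}"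
  unfolding reidx by (rule card_image) simp

context LS begin

definition cntc :: "nat \<Rightarrow> nat" where "cntc j = card {h \<in> {1..n}. col h = j}"

lemma two_edges: assumes "h \<in> {1..n}" "h' \<in> {1..n}" "h \<noteq> h'" "col h = j" "col h' = j"
  shows "2 \<le> r j E"
proof -
  have jk: "j < k" using col_k assms by blast
  obtain a where a: "a \<in> X h" using Xne assms by blast
  obtain b where b: "b \<in> X h'" using Xne assms by blast
  have disj: "X h \<inter> X h' = {}"
  proof (rule ccontr)
    assume "X h \<inter> X h' \<noteq> {}"
    then have "col h \<noteq> col h'" by (rule col_proper[OF assms(1-3)])
    then show False using assms(4,5) by simp
  qed
  have ab: "a \<noteq> b" using a b disj by blast
  have bh: "b \<notin> X h" using b disj by blast
  have inE: "a \<in> E" "b \<in> E" using XE assms a b by blast+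
  have ra: "r j {a} = 1" using col_nl[of h a] assms a by simp
  have rb: "r j {b} = 1" using col_nl[of h' b] assms b by simp
  have "\<not> r j {a,b} \<le> 1"
  proof
    assume le: "r j {a,b} \<le> 1"
    have dab: "1 \<le> dfc j {a,b}" using par_I[OF jk inE ab ra rb le] .
    have PE: "{a,b} \<subseteq> E" using inE by simp
    have "dfc j {a,b} \<le> (\<Sum>m<k. dfc m {a,b})" using jk PE by (intro sum_ge1 dfc_nn) auto
    also have "\<dots> = D {a,b}" using PE by (intro sum_dfc_small) (auto simp: card_insert_if)
    finally have "1 \<le> D {a,b}" using dab by simp
    then obtain g where g: "g \<in> {1..n}" "a \<in> X g" "b \<in> X g" "t g = 1" using D_pair_edge[OF inE ab] by blast
    have cg: "2 \<le> card (X g)"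
    proof -
      have "card {a,b} \<le> card (X g)" using g finX by (intro card_mono) auto
      then show ?thesis using ab by simp
    qed
    have gc: "good g (col g)" using col_AB g cg by simp
    have "1 \<le> dfc (col g) {a,b}" using good_pair[OF gc g(4) g(2) g(3) ab] .
    then have cgj: "col g = j" using pair_unique[of "col g" j a b] gc good_k jk inE ab dab by blast
    have gh: "g \<noteq> h" using g bh by blast
    have ne: "X g \<inter> X h \<noteq> {}" using g a by blast
    have "col g \<noteq> col h" using col_proper[OF g(1) assms(1) gh ne] .
    then show False using cgj assms(4) by simp
  qed
  then have "2 \<le> r j {a,b}" using r_card[OF jk, of "{a,b}"] inE by simp
  moreover have "r j {a,b} \<le> r j E" using jk inE by (intro r_mono) auto
  ultimately show ?thesis by simp
qed

lemma rE_ge: assumes jk: "j < k"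
  shows "(if cntc j = 1 then 1 else 0) + 2 * (if 2 \<le> cntc j then 1 else 0) \<le> r j E"
proof -
  have fS: "finite {h \<in> {1..n}. col h = j}" by simp
  consider "cntc j = 0" | "cntc j = 1" | "2 \<le> cntc j" by linarith
  then show ?thesis
  proof cases
    case 1 then show ?thesis using r_nonneg[OF jk] by simp
  next
    case 2
    then have "card {h \<in> {1..n}. col h = j} = 1" unfolding cntc_def .
    then have "{h \<in> {1..n}. col h = j} \<noteq> {}" by (metis card.empty zero_neq_one)
    then obtain h where h: "h \<in> {1..n}" "col h = j" by blast
    obtain e where e: "e \<in> X h" using Xne h by blast
    have "r j {e} = 1" using col_nl h e by blast
    moreover have "r j {e} \<le> r j E" using jk e XE h by (intro r_mono) auto
    ultimately show ?thesis using 2 by simp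
  next
    case 3
    then obtain S where S: "S \<subseteq> {h \<in> {1..n}. col h = j}" "card S = 2"
      unfolding cntc_def by (meson obtain_subset_with_card_n)
    then obtain h h' where hh: "h \<in> S" "h' \<in> S" "h \<noteq> h'" by (metis card_2_iff insertI1 insertI2)
    have "2 \<le> r j E" using two_edges[of h h' j] hh S by auto
    then show ?thesis using 3 by simp
  qed
qed

lemma part1_loc: "\<exists>c. proper_coloring n X k c \<and>
   int (c_one n k c) + 2 * int (c_two_plus n k c) \<le> (\<Sum>j<k. r j E)"
proof -
  define c where "c h = col h + 1" for h
  have pc: "proper_coloring n X k c" unfolding proper_coloring_def c_def
    using col_k col_proper by fastforce
  have cs: "card {h \<in> {1..n}. c h = Suc j} = cntc j" for j unfolding c_def cntc_def by simp
  have "c_one n k c = card {j \<in> {..<k}. card {h \<in> {1..n}. c h = Suc j} = 1}"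
    unfolding c_one_def by (rule card_reidx)
  then have c1: "c_one n k c = card {j \<in> {..<k}. cntc j = 1}" unfolding cs .
  have "c_two_plus n k c = card {j \<in> {..<k}. 2 \<le> card {h \<in> {1..n}. c h = Suc j}}"
    unfolding c_two_plus_def by (rule card_reidx)
  then have c2: "c_two_plus n k c = card {j \<in> {..<k}. 2 \<le> cntc j}" unfolding cs .
  have "int (card {j \<in> {..<k}. cntc j = 1}) + 2 * int (card {j \<in> {..<k}. 2 \<le> cntc j})
      = (\<Sum>j<k. (if cntc j = 1 then 1 else 0)) + 2 * (\<Sum>j<k. (if 2 \<le> cntc j then 1 else 0))"
    by (simp only: cnt finite_lessThan)
  also have "\<dots> = (\<Sum>j<k. (if cntc j = 1 then 1 else 0) + 2 * (if 2 \<le> cntc j then 1 else 0))"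
    by (simp add: sum.distrib sum_distrib_left)
  also have "\<dots> \<le> (\<Sum>j<k. r j E)" using rE_ge by (intro sum_mono) auto
  finally show ?thesis using pc c1 c2 by auto
qed

lemma nonloop_col: assumes "j < k" "e \<in> E" "r j {e} = 1" shows "\<exists>h\<in>{1..n}. e \<in> X h \<and> col h = j"
proof (rule ccontr)
  assume nc: "\<not> (\<exists>h\<in>{1..n}. e \<in> X h \<and> col h = j)"
  define C where "C = {h \<in> {1..n}. e \<in> X h}"
  define L where "L = {m \<in> {..<k}. r m {e} = 1}"
  have inj: "inj_on col C"
  proof (rule inj_onI, rule ccontr)
    fix h h' assume hh: "h \<in> C" "h' \<in> C" "col h = col h'" "h \<noteq> h'"
    have "X h \<inter> X h' \<noteq> {}" using hh unfolding C_def by blast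
    then have "col h \<noteq> col h'" using col_proper[of h h'] hh unfolding C_def by blast
    then show False using hh(3) by simp
  qed
  have sub: "col ` C \<subseteq> L"
  proof
    fix m assume "m \<in> col ` C"
    then obtain h where h: "h \<in> C" "m = col h" by blast
    have "col h < k" using col_k h unfolding C_def by blast
    moreover have "r (col h) {e} = 1" using col_nl h unfolding C_def by blast
    ultimately show "m \<in> L" using h unfolding L_def by blast
  qed
  have jL: "j \<in> L" using assms unfolding L_def by simp
  have jn: "j \<notin> col ` C" using nc unfolding C_def by blast
  have "card (col ` C) = card C" using inj by (rule card_image)
  also have "\<dots> = card L" using card_nl[OF assms(2)] unfolding weight_def C_def L_def by simp
  finally have ceq: "card (col ` C) = card L" .
  have ps: "col ` C \<subset> L" using sub jL jn by blast
  have fL: "finite L" unfolding L_def by simp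
  have "card (col ` C) < card L" using psubset_card_mono[OF fL ps] .
  then show False using ceq by simp
qed

lemma r_union_le: assumes jk: "j < k" shows "finite I \<Longrightarrow> (\<forall>h\<in>I. B h \<subseteq> E) \<Longrightarrow> r j (\<Union>h\<in>I. B h) \<le> (\<Sum>h\<in>I. r j (B h))"
proof (induction I rule: finite_induct)
  case empty then show ?case using r_empty[OF jk] by simp
next
  case (insert i I)
  have "r j (B i \<union> (\<Union>h\<in>I. B h)) \<le> r j (B i) + r j (\<Union>h\<in>I. B h)"
    using insert jk by (intro r_subadd) auto
  then show ?case using insert by simp
qed

lemma rank_up: assumes jk: "j < k" and AE: "A \<subseteq> E"
  shows "r j A \<le> (\<Sum>h\<in>{h \<in> {1..n}. col h = j}. int (min (card (A \<inter> X h)) (t h)))"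
proof -
  let ?C = "{h \<in> {1..n}. col h = j}"
  let ?U = "\<Union>h\<in>?C. X h"
  have fA: "finite A" using AE finA by blast
  have "r j A = r j ((A \<inter> ?U) \<union> (A - ?U))" by (metis Int_Diff_Un)
  also have "\<dots> \<le> r j (A \<inter> ?U) + r j (A - ?U)" using jk AE by (intro r_subadd) auto
  finally have s1: "r j A \<le> r j (A \<inter> ?U) + r j (A - ?U)" .
  have "r j (A - ?U) \<le> (\<Sum>e\<in>A - ?U. r j {e})" using jk AE fA by (intro r_le_sum) auto
  also have "\<dots> = (\<Sum>e\<in>A - ?U. 0)"
  proof (rule sum.cong)
    fix e assume e: "e \<in> A - ?U"
    have "r j {e} \<noteq> 1" using nonloop_col[OF jk, of e] e AE by blast
    then show "r j {e} = 0" using r_single[OF jk, of e] e AE by blast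
  qed simp
  finally have s2: "r j (A - ?U) \<le> 0" by simp
  have "A \<inter> ?U = (\<Union>h\<in>?C. A \<inter> X h)" by blast
  then have "r j (A \<inter> ?U) \<le> (\<Sum>h\<in>?C. r j (A \<inter> X h))" using r_union_le[OF jk, of ?C "\<lambda>h. A \<inter> X h"] AE by auto
  also have "\<dots> \<le> (\<Sum>h\<in>?C. int (min (card (A \<inter> X h)) (t h)))"
  proof (rule sum_mono)
    fix h assume h: "h \<in> ?C"
    have hn: "h \<in> {1..n}" "col h = j" using h by auto
    have c1: "r j (A \<inter> X h) \<le> int (card (A \<inter> X h))" by (rule r_card[OF jk]) (use AE in blast)
    have c2: "r j (A \<inter> X h) \<le> int (t h)"
    proof (cases "t h + 1 \<le> card (X h)")
      case True
      have "good h j" using col_AB[OF hn(1) True] hn by simp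
      then show ?thesis using good_rank[OF hn(1)] by auto
    next
      case False
      have "card (A \<inter> X h) \<le> card (X h)" using finX[OF hn(1)] by (intro card_mono) auto
      then show ?thesis using c1 False typeC(1)[OF hn(1) False] by simp
    qed
    show "r j (A \<inter> X h) \<le> int (min (card (A \<inter> X h)) (t h))" using c1 c2 by simp
  qed
  finally show ?thesis using s1 s2 by simp
qed

lemma part2_eq: assumes all: "\<And>A. A \<subseteq> E \<Longrightarrow> (\<Sum>j<k. r j A) = rho n X t A"
  and jk: "j < k" and AE: "A \<subseteq> E"
  shows "r j A = (\<Sum>h\<in>{h \<in> {1..n}. col h = j}. int (min (card (A \<inter> X h)) (t h)))"
proof -
  define f where "f h = int (min (card (A \<inter> X h)) (t h))" for h
  define M where "M j = (\<Sum>h\<in>{h \<in> {1..n}. col h = j}. f h)" for j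
  have "(\<Sum>j\<in>{..<k}. M j) = (\<Sum>h\<in>{1..n}. f h)"
    unfolding M_def
  proof (rule sum.group)
    show "col ` {1..n} \<subseteq> {..<k}" using col_k by blast
  qed auto
  also have "\<dots> = (\<Sum>j<k. r j A)" using all[OF AE] unfolding rho_def f_def by simp
  finally have "(\<Sum>j<k. M j) - (\<Sum>j<k. r j A) = 0" by simp
  then have z: "(\<Sum>j<k. M j - r j A) = 0" by (simp only: sum_subtractf)
  have nn: "\<And>j. j \<in> {..<k} \<Longrightarrow> 0 \<le> M j - r j A"
  proof -
    fix j assume "j \<in> {..<k}"
    then have "r j A \<le> M j" using rank_up[OF _ AE, of j] unfolding M_def f_def by simp
    then show "0 \<le> M j - r j A" by simp
  qed
  have eqv: "((\<Sum>j\<in>{..<k}. M j - r j A) = 0) = (\<forall>j\<in>{..<k}. M j - r j A = 0)"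
  proof (rule sum_nonneg_eq_0_iff)
    show "finite {..<k}" by simp
    fix x assume "x \<in> {..<k}" then show "0 \<le> M x - r x A" by (rule nn)
  qed
  have "\<forall>j\<in>{..<k}. M j - r j A = 0" using eqv z by blast
  then have "M j = r j A" using jk by simp
  then show ?thesis unfolding M_def f_def by simp
qed

end


lemma sum_list_nth_map: "(\<Sum>r\<leftarrow>N. r A) = (\<Sum>j<length N. (N ! j) A)"
  by (simp add: sum_list_sum_nth atLeast0LessThan)

lemma interp: assumes hyp: "hypergraph E n X" and h2: "H2 n X" and h3: "H3 E n X" and hT: "condT n X t"
  and N: "N \<in> Delta E \<sigma> k"
  and agree: "\<forall>A. A \<subseteq> E \<and> (card A \<le> 3 \<or> cond_b n X t A \<or> cond_c n X t A \<or> cond_d n X t A)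
                  \<longrightarrow> \<sigma> A = rho n X t A"
  shows "LS E n X t k (\<lambda>j. N ! j)" and "\<And>A. A \<subseteq> E \<Longrightarrow> \<sigma> A = (\<Sum>j<k. (N ! j) A)"
proof -
  have len: "length N = k" and ms: "\<forall>r\<in>set N. matroid_rank E r"
    and sm: "\<forall>A. A \<subseteq> E \<longrightarrow> \<sigma> A = (\<Sum>r\<leftarrow>N. r A)" using N unfolding Delta_def by auto
  show s: "\<And>A. A \<subseteq> E \<Longrightarrow> \<sigma> A = (\<Sum>j<k. (N ! j) A)" using sm len sum_list_nth_map by metis
  show "LS E n X t k (\<lambda>j. N ! j)"
  proof
    show "hypergraph E n X" "H2 n X" "H3 E n X" "condT n X t" by fact+
  next
    fix j assume "j < k" then show "matroid_rank E (N ! j)" using ms len by simp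
  next
    fix A assume "A \<subseteq> E" "card A \<le> 3 \<or> cond_b n X t A \<or> cond_c n X t A \<or> cond_d n X t A"
    then show "(\<Sum>j<k. (N ! j) A) = rho n X t A" using s agree by metis
  qed
qed

lemma min_submod: "u + v = a + b \<Longrightarrow> v \<le> a \<Longrightarrow> v \<le> b \<Longrightarrow> min u t + min v t \<le> min a t + min b (t::nat)"
  by (simp add: min_def)

lemma unif_sum_matroid: assumes fE: "finite E" and fin: "finite C" and XE: "\<forall>h\<in>C. X h \<subseteq> E"
  and disj: "\<forall>h\<in>C. \<forall>h'\<in>C. h \<noteq> h' \<longrightarrow> X h \<inter> X h' = {}"
  shows "matroid_rank E (\<lambda>A. (\<Sum>h\<in>C. int (min (card (A \<inter> X h)) (t h))))"
  unfolding matroid_rank_def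
proof (intro conjI allI impI)
  fix A
  show "(\<Sum>h\<in>C. int (min (card (A \<inter> X h)) (t h))) = (\<Sum>h\<in>C. int (min (card (A \<inter> E \<inter> X h)) (t h)))"
  proof (rule sum.cong)
    fix h assume "h \<in> C"
    then have "A \<inter> E \<inter> X h = A \<inter> X h" using XE by blast
    then show "int (min (card (A \<inter> X h)) (t h)) = int (min (card (A \<inter> E \<inter> X h)) (t h))" by simp
  qed simp
next
  fix A :: "'a set" assume "A \<subseteq> E"
  show "0 \<le> (\<Sum>h\<in>C. int (min (card (A \<inter> X h)) (t h)))" by (intro sum_nonneg) simp
next
  fix A assume AE: "A \<subseteq> E"
  have fA: "finite A" using AE fE finite_subset by blast
  have "(\<Sum>h\<in>C. int (min (card (A \<inter> X h)) (t h))) \<le> (\<Sum>h\<in>C. int (card (A \<inter> X h)))"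
    by (intro sum_mono) simp
  also have "\<dots> = int (\<Sum>h\<in>C. card (A \<inter> X h))" by simp
  also have "(\<Sum>h\<in>C. card (A \<inter> X h)) = card (\<Union>h\<in>C. A \<inter> X h)"
    using fin fA disj by (intro card_UN_disjoint[symmetric]) auto
  also have "card (\<Union>h\<in>C. A \<inter> X h) \<le> card A" using fA by (intro card_mono) auto
  finally show "(\<Sum>h\<in>C. int (min (card (A \<inter> X h)) (t h))) \<le> int (card A)" by simp
next
  fix A B :: "'a set" assume AB: "A \<subseteq> B \<and> B \<subseteq> E"
  have fB: "finite B" using AB fE finite_subset by blast
  show "(\<Sum>h\<in>C. int (min (card (A \<inter> X h)) (t h))) \<le> (\<Sum>h\<in>C. int (min (card (B \<inter> X h)) (t h)))"
  proof (rule sum_mono)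
    fix h assume "h \<in> C"
    have "card (A \<inter> X h) \<le> card (B \<inter> X h)" using AB fB by (intro card_mono) auto
    then show "int (min (card (A \<inter> X h)) (t h)) \<le> int (min (card (B \<inter> X h)) (t h))" by simp
  qed
next
  fix A B :: "'a set" assume AB: "A \<subseteq> E \<and> B \<subseteq> E"
  have fA: "finite A" "finite B" using AB fE finite_subset by blast+
  have "(\<Sum>h\<in>C. int (min (card ((A \<union> B) \<inter> X h)) (t h))) + (\<Sum>h\<in>C. int (min (card ((A \<inter> B) \<inter> X h)) (t h)))
      = (\<Sum>h\<in>C. int (min (card ((A \<union> B) \<inter> X h)) (t h)) + int (min (card ((A \<inter> B) \<inter> X h)) (t h)))"
    by (simp add: sum.distrib)
  also have "\<dots> \<le> (\<Sum>h\<in>C. int (min (card (A \<inter> X h)) (t h)) + int (min (card (B \<inter> X h)) (t h)))"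
  proof (rule sum_mono)
    fix h assume "h \<in> C"
    let ?a = "A \<inter> X h" and ?b = "B \<inter> X h"
    have f: "finite ?a" "finite ?b" using fA by auto
    have e1: "(A \<union> B) \<inter> X h = ?a \<union> ?b" by blast
    have e2: "(A \<inter> B) \<inter> X h = ?a \<inter> ?b" by blast
    have "card (?a \<union> ?b) + card (?a \<inter> ?b) = card ?a + card ?b" using f by (rule card_Un_Int[symmetric])
    moreover have "card (?a \<inter> ?b) \<le> card ?a" using f by (intro card_mono) auto
    moreover have "card (?a \<inter> ?b) \<le> card ?b" using f by (intro card_mono) auto
    ultimately have "min (card (?a \<union> ?b)) (t h) + min (card (?a \<inter> ?b)) (t h) \<le> min (card ?a) (t h) + min (card ?b) (t h)"
      by (rule min_submod)
    then show "int (min (card ((A \<union> B) \<inter> X h)) (t h)) + int (min (card ((A \<inter> B) \<inter> X h)) (t h))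
        \<le> int (min (card (A \<inter> X h)) (t h)) + int (min (card (B \<inter> X h)) (t h))"
      unfolding e1 e2 by linarith
  qed
  also have "\<dots> = (\<Sum>h\<in>C. int (min (card (A \<inter> X h)) (t h))) + (\<Sum>h\<in>C. int (min (card (B \<inter> X h)) (t h)))"
    by (simp add: sum.distrib)
  finally show "(\<Sum>h\<in>C. int (min (card ((A \<union> B) \<inter> X h)) (t h))) + (\<Sum>h\<in>C. int (min (card ((A \<inter> B) \<inter> X h)) (t h)))
      \<le> (\<Sum>h\<in>C. int (min (card (A \<inter> X h)) (t h))) + (\<Sum>h\<in>C. int (min (card (B \<inter> X h)) (t h)))" .
qed


lemma phi_nth: "i < k \<Longrightarrow> phi E n X t k c ! i = (\<lambda>A.
       (\<Sum>h \<in> {h \<in> {1..n}. c h = Suc i}. uniform_rank (t h) (X h) A)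
       + uniform_rank 0 (E - (\<Union>h \<in> {h \<in> {1..n}. c h = Suc i}. X h)) A)"
proof -
  assume ik: "i < k"
  have "[1..<k+1] ! i = Suc i" using ik by (simp del: upt_Suc)
  moreover have "i < length [1..<k+1]" using ik by (simp del: upt_Suc)
  ultimately show ?thesis unfolding phi_def by (simp del: upt_Suc)
qed

lemma phi_fun: "(\<lambda>A. (\<Sum>h \<in> C. uniform_rank (t h) (X h) A) + uniform_rank 0 Y A)
   = (\<lambda>A. (\<Sum>h\<in>C. int (min (card (A \<inter> X h)) (t h))))"
  unfolding uniform_rank_def by simp

lemma phi_in_Delta: assumes hyp: "hypergraph E n X" and pc: "proper_coloring n X k c"
  shows "phi E n X t k c \<in> Delta E (rho n X t) k"
proof -
  have fE: "finite E" and XE: "\<forall>i\<in>{1..n}. X i \<subseteq> E" using hyp unfolding hypergraph_def by auto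
  have ck: "\<forall>i\<in>{1..n}. c i \<in> {1..k}" and pr: "\<forall>i\<in>{1..n}. \<forall>j\<in>{1..n}. i \<noteq> j \<and> X i \<inter> X j \<noteq> {} \<longrightarrow> c i \<noteq> c j"
    using pc unfolding proper_coloring_def by auto
  define f where "f i = (\<lambda>A. (\<Sum>h\<in>{h \<in> {1..n}. c h = i}. int (min (card (A \<inter> X h)) (t h))))" for i
  have pf: "phi E n X t k c = map f [1..<k+1]"
    unfolding phi_def f_def phi_fun ..
  have mr: "matroid_rank E (f i)" for i
    unfolding f_def
  proof (rule unif_sum_matroid[OF fE])
    show "finite {h \<in> {1..n}. c h = i}" by simp
    show "\<forall>h\<in>{h \<in> {1..n}. c h = i}. X h \<subseteq> E" using XE by auto
    show "\<forall>h\<in>{h \<in> {1..n}. c h = i}. \<forall>h'\<in>{h \<in> {1..n}. c h = i}. h \<noteq> h' \<longrightarrow> X h \<inter> X h' = {}"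
      using pr by blast
  qed
  have sm: "(\<Sum>r\<leftarrow>phi E n X t k c. r A) = rho n X t A" for A
  proof -
    have "(\<Sum>r\<leftarrow>phi E n X t k c. r A) = (\<Sum>i\<leftarrow>[1..<k+1]. f i A)" unfolding pf by (simp add: comp_def)
    also have "\<dots> = (\<Sum>i\<in>set [1..<k+1]. f i A)" by (rule sum_list_distinct_conv_sum_set) simp
    also have "\<dots> = (\<Sum>i\<in>{1..k}. f i A)"
    proof -
      have st: "set [1..<k+1] = {1..k}" by auto
      show ?thesis by (simp only: st)
    qed
    also have "\<dots> = (\<Sum>h\<in>{1..n}. int (min (card (A \<inter> X h)) (t h)))"
      unfolding f_def by (rule sum.group) (use ck in auto)
    finally show ?thesis unfolding rho_def .
  qed
  show ?thesis unfolding Delta_def using pf mr sm by auto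
qed

lemma Delta_in_phi: assumes hyp: "hypergraph E n X" and h2: "H2 n X" and h3: "H3 E n X" and hT: "condT n X t"
  and N: "N \<in> Delta E (rho n X t) k"
  shows "N \<in> phi E n X t k ` {c. proper_coloring n X k c}"
proof -
  have ag: "\<forall>A. A \<subseteq> E \<and> (card A \<le> 3 \<or> cond_b n X t A \<or> cond_c n X t A \<or> cond_d n X t A)
                  \<longrightarrow> rho n X t A = rho n X t A" by simp
  note ip = interp[OF hyp h2 h3 hT N ag]
  interpret L: LS E n X t k "\<lambda>j. N ! j" by (rule ip(1))
  have all: "\<And>A. A \<subseteq> E \<Longrightarrow> (\<Sum>j<k. (N ! j) A) = rho n X t A" using ip(2) by simp
  define c where "c h = L.col h + 1" for h
  have pc: "proper_coloring n X k c" unfolding proper_coloring_def c_def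
    using L.col_k L.col_proper by fastforce
  have len: "length N = k" using N unfolding Delta_def by simp
  have "N = phi E n X t k c"
  proof (rule nth_equalityI)
    show "length N = length (phi E n X t k c)" using len unfolding phi_def by simp
  next
    fix i assume "i < length N"
    then have ik: "i < k" using len by simp
    show "N ! i = phi E n X t k c ! i"
    proof
      fix A
      have "phi E n X t k c ! i = (\<lambda>A. (\<Sum>h\<in>{h \<in> {1..n}. c h = Suc i}. int (min (card (A \<inter> X h)) (t h))))"
        unfolding phi_nth[OF ik] phi_fun ..
      then have p: "(phi E n X t k c ! i) A = (\<Sum>h\<in>{h \<in> {1..n}. L.col h = i}. int (min (card (A \<inter> X h)) (t h)))"
        unfolding c_def by simp
      have "(N ! i) A = (N ! i) (A \<inter> E)" using L.r_E[OF ik] .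
      also have "\<dots> = (\<Sum>h\<in>{h \<in> {1..n}. L.col h = i}. int (min (card (A \<inter> E \<inter> X h)) (t h)))"
        using L.part2_eq[OF all ik] by blast
      also have "\<dots> = (\<Sum>h\<in>{h \<in> {1..n}. L.col h = i}. int (min (card (A \<inter> X h)) (t h)))"
      proof (rule sum.cong)
        fix h assume "h \<in> {h \<in> {1..n}. L.col h = i}"
        then have "A \<inter> E \<inter> X h = A \<inter> X h" using L.XE by blast
        then show "int (min (card (A \<inter> E \<inter> X h)) (t h)) = int (min (card (A \<inter> X h)) (t h))" by simp
      qed simp
      finally show "(N ! i) A = (phi E n X t k c ! i) A" using p by simp
    qed
  qed
  then show ?thesis using pc by blast
qed

lemma chrom_le: assumes pc: "proper_coloring n X k c"
  shows "chromatic_number n X \<le> c_one n k c + c_two_plus n k c"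
proof -
  have ck: "\<forall>i\<in>{1..n}. c i \<in> {1..k}" and pr: "\<forall>i\<in>{1..n}. \<forall>j\<in>{1..n}. i \<noteq> j \<and> X i \<inter> X j \<noteq> {} \<longrightarrow> c i \<noteq> c j"
    using pc unfolding proper_coloring_def by auto
  define U where "U = c ` {1..n}"
  have fU: "finite U" unfolding U_def by simp
  obtain g where g: "bij_betw g U {0..<card U}" using ex_bij_betw_finite_nat[OF fU] by blast
  define c' where "c' h = g (c h) + 1" for h
  have "proper_coloring n X (card U) c'" unfolding proper_coloring_def
  proof (intro conjI ballI impI)
    fix i assume i: "i \<in> {1..n}"
    then have "c i \<in> U" unfolding U_def by blast
    then have "g (c i) \<in> {0..<card U}" using g bij_betwE by blast
    then show "c' i \<in> {1..card U}" unfolding c'_def by auto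
  next
    fix i j assume ij: "i \<in> {1..n}" "j \<in> {1..n}" "i \<noteq> j \<and> X i \<inter> X j \<noteq> {}"
    then have "c i \<noteq> c j" using pr by blast
    moreover have "c i \<in> U" "c j \<in> U" using ij unfolding U_def by auto
    moreover have "inj_on g U" using g bij_betw_imp_inj_on by blast
    ultimately have "g (c i) \<noteq> g (c j)" by (metis inj_on_contraD)
    then show "c' i \<noteq> c' j" unfolding c'_def by simp
  qed
  then have ch: "chromatic_number n X \<le> card U" unfolding chromatic_number_def by (intro Least_le) blast
  define O1 where "O1 = {i \<in> {1..k}. card {h \<in> {1..n}. c h = i} = 1}"
  define O2 where "O2 = {i \<in> {1..k}. card {h \<in> {1..n}. c h = i} \<ge> 2}"
  have "U \<subseteq> O1 \<union> O2"
  proof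
    fix i assume "i \<in> U"
    then obtain h where h: "h \<in> {1..n}" "c h = i" unfolding U_def by blast
    have ik: "i \<in> {1..k}" using ck h by blast
    have "h \<in> {h \<in> {1..n}. c h = i}" using h by simp
    then have "{h \<in> {1..n}. c h = i} \<noteq> {}" by blast
    then have "card {h \<in> {1..n}. c h = i} \<noteq> 0" by simp
    then have "card {h \<in> {1..n}. c h = i} = 1 \<or> card {h \<in> {1..n}. c h = i} \<ge> 2" by arith
    then show "i \<in> O1 \<union> O2" using ik unfolding O1_def O2_def by blast
  qed
  then have "card U \<le> card (O1 \<union> O2)" unfolding O1_def O2_def by (intro card_mono) auto
  also have "\<dots> \<le> card O1 + card O2" by (rule card_Un_le)
  finally show ?thesis using ch unfolding O1_def O2_def c_one_def c_two_plus_def by simp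
qed

theorem theorem2p9:
  fixes E :: "'a set" and n :: nat and X :: "nat \<Rightarrow> 'a set" and t :: "nat \<Rightarrow> nat"
    and \<sigma> :: "'a set \<Rightarrow> int"
  assumes hyp: "hypergraph E n X"
    and t_bounds: "\<forall>i \<in> {1..n}. t i \<le> card (X i)"
    and h2: "H2 n X"
    and h3: "H3 E n X"
    and hT: "condT n X t"
    and poly: "polymatroid E \<sigma>"
    and agree: "\<forall>A. A \<subseteq> E \<and> (card A \<le> 3 \<or> cond_b n X t A \<or> cond_c n X t A \<or> cond_d n X t A)
                  \<longrightarrow> \<sigma> A = rho n X t A"
  shows "(\<forall>k \<ge> 1. \<forall>N \<in> Delta E \<sigma> k. \<exists>c. proper_coloring n X k c \<and>
              \<sigma> E \<ge> int (c_one n k c) + 2 * int (c_two_plus n k c))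
       \<and> (\<forall>k \<ge> 1. phi E n X t k ` {c. proper_coloring n X k c} = Delta E (rho n X t) k)
       \<and> (\<sigma> E < int (chromatic_number n X) \<longrightarrow> indecomposable E \<sigma>)"
proof (intro conjI allI impI ballI)
  have P1: "\<exists>c. proper_coloring n X k c \<and> \<sigma> E \<ge> int (c_one n k c) + 2 * int (c_two_plus n k c)"
    if N: "N \<in> Delta E \<sigma> k" for k N
  proof -
    note ip = interp[OF hyp h2 h3 hT N agree]
    interpret L: LS E n X t k "\<lambda>j. N ! j" by (rule ip(1))
    have "\<sigma> E = (\<Sum>j<k. (N ! j) E)" using ip(2) by simp
    then show ?thesis using L.part1_loc by simp
  qed
  fix k :: nat assume "1 \<le> k"
  {
    fix N assume "N \<in> Delta E \<sigma> k"
    then show "\<exists>c. proper_coloring n X k c \<and> \<sigma> E \<ge> int (c_one n k c) + 2 * int (c_two_plus n k c)"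
      using P1 by blast
  }
  show "phi E n X t k ` {c. proper_coloring n X k c} = Delta E (rho n X t) k"
    using phi_in_Delta[OF hyp] Delta_in_phi[OF hyp h2 h3 hT] by blast
next
  have P1: "\<exists>c. proper_coloring n X k c \<and> \<sigma> E \<ge> int (c_one n k c) + 2 * int (c_two_plus n k c)"
    if N: "N \<in> Delta E \<sigma> k" for k N
  proof -
    note ip = interp[OF hyp h2 h3 hT N agree]
    interpret L: LS E n X t k "\<lambda>j. N ! j" by (rule ip(1))
    have "\<sigma> E = (\<Sum>j<k. (N ! j) E)" using ip(2) by simp
    then show ?thesis using L.part1_loc by simp
  qed
  assume lt: "\<sigma> E < int (chromatic_number n X)"
  show "indecomposable E \<sigma>" unfolding indecomposable_def
  proof
    assume "\<exists>k N. N \<in> Delta E \<sigma> k"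
    then obtain k N where N: "N \<in> Delta E \<sigma> k" by blast
    obtain c where c: "proper_coloring n X k c" "\<sigma> E \<ge> int (c_one n k c) + 2 * int (c_two_plus n k c)"
      using P1[OF N] by blast
    have "chromatic_number n X \<le> c_one n k c + c_two_plus n k c" using chrom_le[OF c(1)] .
    then show False using c(2) lt by linarith
  qed
qed


end
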